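(* For all $n\ge 2$ and $0\le k\le n-2$, $$f(n,k)=\sum_{j=0}^{k}\binom{k-j}{j}(-1)^j\,(n-2-j)!.$$
   Context: A complete non-ambiguous matrix (CNM) of size $n$ is an $n\times n$ matrix $M=(m_{i,j})$ with entries in $\{0,1\}$ whose support $T=\{(i,j): m_{i,j}=1\}$ (whose elements are called vertices) satisfies: (1) $(1,1)\in T$; (2) for every $p=(i,j)\in T$ with $p\neq(1,1)$, exactly one of the following holds: there is $(i',j)\in T$ with $i'<i$, or there is $(i,j')\in T$ with $j'<j$; (3) every row and every column of $M$ contains at least one vertex; (4) define the parent of $p=(i,j)\neq(1,1)$ to be $(i',j)$ with $i'<i$ maximal if such a vertex exists, and otherwise $(i,j')$ with $j'<j$ maximal; then every vertex is the parent of either zero or exactly two vertices. A vertex with no children is a leaf. A CNM of size $n$ is upper-diagonal if its leaves are exactly the positions $(i,n+1-i)$, $1\le i\le n$. For $n\ge 2$ and $0\le k\le n-2$, $f(n,k)$ is the number of upper-diagonal CNMs $M$ of size $n$ with $m_{i,n-i}=0$ for $1\le i\le k$ and $m_{k+1,n-k-1}=1$. Binomial coefficients $\binom{a}{b}$ with $b>a\ge 0$ are $0$. *)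

theory Defs
  imports Main
begin

text \<open>A 0/1 matrix of size n is identified with its support
  T \<subseteq> {1..n} \<times> {1..n} (1-based positions (row, column)).\<close>

definition cnm_parent :: "(nat \<times> nat) set \<Rightarrow> nat \<times> nat \<Rightarrow> nat \<times> nat" where
  "cnm_parent T p =
     (if (\<exists>i'<fst p. (i', snd p) \<in> T)
      then (Max {i'. i' < fst p \<and> (i', snd p) \<in> T}, snd p)
      else (fst p, Max {j'. j' < snd p \<and> (fst p, j') \<in> T}))"

definition cnm_children :: "(nat \<times> nat) set \<Rightarrow> nat \<times> nat \<Rightarrow> (nat \<times> nat) set" where
  "cnm_children T p = {q \<in> T. q \<noteq> (1,1) \<and> cnm_parent T q = p}"

definition is_CNM :: "nat \<Rightarrow> (nat \<times> nat) set \<Rightarrow> bool" where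
  "is_CNM n T \<longleftrightarrow>
     T \<subseteq> {1..n} \<times> {1..n} \<and>
     (1,1) \<in> T \<and>
     (\<forall>(i,j)\<in>T. (i,j) \<noteq> (1,1) \<longrightarrow>
        ((\<exists>i'<i. (i',j) \<in> T) \<noteq> (\<exists>j'<j. (i,j') \<in> T))) \<and>
     (\<forall>i\<in>{1..n}. \<exists>j. (i,j) \<in> T) \<and>
     (\<forall>j\<in>{1..n}. \<exists>i. (i,j) \<in> T) \<and>
     (\<forall>p\<in>T. card (cnm_children T p) = 0 \<or> card (cnm_children T p) = 2)"

definition cnm_leaves :: "(nat \<times> nat) set \<Rightarrow> (nat \<times> nat) set" where
  "cnm_leaves T = {p \<in> T. cnm_children T p = {}}"

definition upper_diagonal :: "nat \<Rightarrow> (nat \<times> nat) set \<Rightarrow> bool" where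
  "upper_diagonal n T \<longleftrightarrow> cnm_leaves T = {(i, n + 1 - i) | i. 1 \<le> i \<and> i \<le> n}"

definition f_cnm :: "nat \<Rightarrow> nat \<Rightarrow> nat" where
  "f_cnm n k = card {T. is_CNM n T \<and> upper_diagonal n T \<and>
      (\<forall>i\<in>{1..k}. (i, n - i) \<notin> T) \<and> (k + 1, n - k - 1) \<in> T}"

end

theory Submission
  imports Defs
begin


datatype tr = Lf nat | Nd tr tr

fun leaves :: "tr \<Rightarrow> nat set" where
  "leaves (Lf x) = {x}" | "leaves (Nd l r) = leaves l \<union> leaves r"
fun lo :: "tr \<Rightarrow> nat" where "lo (Lf x) = x" | "lo (Nd l r) = lo l"
fun hi :: "tr \<Rightarrow> nat" where "hi (Lf x) = x" | "hi (Nd l r) = hi r"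
fun pos :: "tr \<Rightarrow> (nat \<times> nat) set" where
  "pos (Lf x) = {(x,x)}" | "pos (Nd l r) = insert (lo l, hi r) (pos l \<union> pos r)"
fun valid :: "tr \<Rightarrow> bool" where
  "valid (Lf x) = True"
| "valid (Nd l r) = (valid l \<and> valid r \<and> leaves l \<inter> leaves r = {} \<and> lo l < lo r \<and> hi l < hi r)"

lemma leaves_finite[simp]: "finite (leaves t)" by (induction t) auto
lemma leaves_ne[simp]: "leaves t \<noteq> {}" by (induction t) auto
lemma lo_in: "lo t \<in> leaves t" by (induction t) auto
lemma hi_in: "hi t \<in> leaves t" by (induction t) auto

lemma lo_hi_minmax: "valid t \<Longrightarrow> lo t = Min (leaves t) \<and> hi t = Max (leaves t)"
proof (induction t)
  case (Lf x) then show ?case by simp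
next
  case (Nd l r)
  then show ?case by (simp add: Min_Un Max_Un)
qed

lemma pos_sub: "pos t \<subseteq> leaves t \<times> leaves t"
  by (induction t) (use lo_in hi_in in auto)

lemma single_leaf: "valid t \<Longrightarrow> leaves t = {x} \<Longrightarrow> t = Lf x"
proof (cases t)
  case (Nd l r)
  assume v: "valid t" and L: "leaves t = {x}"
  have "leaves l \<subseteq> {x}" "leaves r \<subseteq> {x}" using L Nd by auto
  then have "leaves l = {x}" "leaves r = {x}" using leaves_ne by (metis subset_singletonD)+
  then show ?thesis using v Nd by simp
qed simp

lemma connected:
  "valid t \<Longrightarrow> X \<subseteq> leaves t \<Longrightarrow> X \<noteq> {} \<Longrightarrow> X \<noteq> leaves t \<Longrightarrow>
    \<exists>p\<in>pos t. (fst p \<in> X) \<noteq> (snd p \<in> X)"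
proof (induction t arbitrary: X)
  case (Lf x) then show ?case by auto
next
  case (Nd l r)
  show ?case
  proof (cases "X \<inter> leaves l \<noteq> {} \<and> X \<inter> leaves l \<noteq> leaves l")
    case True
    then obtain p where "p \<in> pos l" "(fst p \<in> X \<inter> leaves l) \<noteq> (snd p \<in> X \<inter> leaves l)"
      using Nd.IH(1)[of "X \<inter> leaves l"] Nd.prems by (auto simp del: fst_conv snd_conv)
    moreover have "fst p \<in> leaves l" "snd p \<in> leaves l" using pos_sub \<open>p \<in> pos l\<close> by force+
    ultimately show ?thesis by (intro bexI[of _ p]) auto
  next
    case F1: False
    show ?thesis
    proof (cases "X \<inter> leaves r \<noteq> {} \<and> X \<inter> leaves r \<noteq> leaves r")
      case True
      then obtain p where "p \<in> pos r" "(fst p \<in> X \<inter> leaves r) \<noteq> (snd p \<in> X \<inter> leaves r)"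
        using Nd.IH(2)[of "X \<inter> leaves r"] Nd.prems by (auto simp del: fst_conv snd_conv)
      moreover have "fst p \<in> leaves r" "snd p \<in> leaves r" using pos_sub \<open>p \<in> pos r\<close> by force+
      ultimately show ?thesis by (intro bexI[of _ p]) auto
    next
      case False
      have d: "leaves l \<inter> leaves r = {}" using Nd.prems by simp
      have "X = leaves l \<or> X = leaves r"
        using F1 False Nd.prems d by auto
      moreover have "lo l \<in> leaves l" "hi r \<in> leaves r" by (rule lo_in, rule hi_in)
      ultimately have "(lo l \<in> X) \<noteq> (hi r \<in> X)" using d by auto
      then show ?thesis by (intro bexI[of _ "(lo l, hi r)"]) auto
    qed
  qed
qed

lemma pos_inj:
  "valid t1 \<Longrightarrow> valid t2 \<Longrightarrow> leaves t1 = leaves t2 \<Longrightarrow> pos t1 = pos t2 \<Longrightarrow> t1 = t2"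
proof (induction t1 arbitrary: t2)
  case (Lf x)
  then show ?case using single_leaf[of t2 x] by simp
next
  case (Nd l r)
  show ?case
  proof (cases t2)
    case (Lf y)
    then have "leaves l \<subseteq> {y}" "leaves r \<subseteq> {y}" using Nd.prems by auto
    then have "leaves l = {y}" "leaves r = {y}" using leaves_ne by (metis subset_singletonD)+
    then show ?thesis using Nd.prems by simp
  next
    case (Nd l' r')
    let ?L = "leaves l \<union> leaves r"
    have v: "valid l" "valid r" "valid l'" "valid r'" using Nd.prems \<open>t2 = Nd l' r'\<close> by auto
    have dl: "leaves l \<inter> leaves r = {}" "leaves l' \<inter> leaves r' = {}"
      using Nd.prems \<open>t2 = Nd l' r'\<close> by auto
    have LL: "leaves l' \<union> leaves r' = ?L" using Nd.prems \<open>t2 = Nd l' r'\<close> by auto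
    have mm1: "lo (Nd l r) = Min ?L" "hi (Nd l r) = Max ?L"
      using lo_hi_minmax[of "Nd l r"] Nd.prems by auto
    have mm2: "lo (Nd l' r') = Min ?L" "hi (Nd l' r') = Max ?L"
      using lo_hi_minmax[of "Nd l' r'"] Nd.prems \<open>t2 = Nd l' r'\<close> LL by auto
    have rho: "(lo l, hi r) = (lo l', hi r')" using mm1 mm2 by simp
    have n1: "(lo l, hi r) \<notin> pos l \<union> pos r"
      using pos_sub[of l] pos_sub[of r] hi_in[of r] lo_in[of l] dl by blast
    have n2: "(lo l', hi r') \<notin> pos l' \<union> pos r'"
      using pos_sub[of l'] pos_sub[of r'] hi_in[of r'] lo_in[of l'] dl by blast
    have U: "pos l \<union> pos r = pos l' \<union> pos r'"
      using Nd.prems \<open>t2 = Nd l' r'\<close> rho n1 n2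
      by (metis insert_ident pos.simps(2))
    have com: "lo l \<in> leaves l \<inter> leaves l'" using rho lo_in by (metis IntI Pair_inject)
    have sub: "leaves a \<subseteq> leaves a'"
      if va: "valid a" and U': "pos a \<union> pos b = pos a' \<union> pos b'"
        and d': "leaves a' \<inter> leaves b' = {}" and cov: "leaves a \<subseteq> leaves a' \<union> leaves b'"
        and c: "leaves a \<inter> leaves a' \<noteq> {}" for a b a' b'
    proof (rule ccontr)
      assume "\<not> leaves a \<subseteq> leaves a'"
      then have "leaves a \<inter> leaves a' \<noteq> leaves a" by blast
      then obtain p where p: "p \<in> pos a" "(fst p \<in> leaves a \<inter> leaves a') \<noteq> (snd p \<in> leaves a \<inter> leaves a')"
        using connected[OF va, of "leaves a \<inter> leaves a'"] c by blast
      have "fst p \<in> leaves a" "snd p \<in> leaves a" using p(1) pos_sub by force+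
      moreover have "p \<in> pos a' \<union> pos b'" using U' p(1) by auto
      ultimately show False using p(2) pos_sub[of a'] pos_sub[of b'] d' by (cases p) auto
    qed
    have A: "leaves l = leaves l'"
    proof
      show "leaves l \<subseteq> leaves l'"
        using sub[of l r l' r'] v U dl LL com by auto
      show "leaves l' \<subseteq> leaves l"
        using sub[of l' r' l r] v U dl LL com by auto
    qed
    have B: "leaves r = leaves r'" using A LL dl by blast
    have "pos l = (pos l \<union> pos r) \<inter> (leaves l \<times> leaves l)"
      using pos_sub[of l] pos_sub[of r] dl by blast
    also have "\<dots> = (pos l' \<union> pos r') \<inter> (leaves l' \<times> leaves l')" using U A by simp
    also have "\<dots> = pos l'" using pos_sub[of l'] pos_sub[of r'] dl by blast
    finally have pl: "pos l = pos l'" .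
    have "pos r = (pos l \<union> pos r) \<inter> (leaves r \<times> leaves r)"
      using pos_sub[of l] pos_sub[of r] dl by blast
    also have "\<dots> = (pos l' \<union> pos r') \<inter> (leaves r' \<times> leaves r')" using U B by simp
    also have "\<dots> = pos r'" using pos_sub[of l'] pos_sub[of r'] dl by blast
    finally have pr: "pos r = pos r'" .
    show ?thesis using Nd.IH(1)[OF v(1) v(3) A pl] Nd.IH(2)[OF v(2) v(4) B pr] \<open>t2 = Nd l' r'\<close> by simp
  qed
qed


lemma pow_sum: "finite N \<Longrightarrow>
  (\<Sum>A\<in>Pow N. fact (card A) * fact (card N - card A) :: nat) = fact (card N + 1)"
proof -
  assume fN: "finite N"
  let ?n = "card N"
  have "(\<Sum>A\<in>Pow N. fact (card A) * fact (?n - card A) :: nat)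
      = (\<Sum>k\<in>{0..?n}. \<Sum>A\<in>{A. A \<in> Pow N \<and> card A = k}. fact (card A) * fact (?n - card A))"
    by (rule sum.group[symmetric]) (use fN card_mono in auto)
  also have "\<dots> = (\<Sum>k\<in>{0..?n}. fact ?n)"
  proof (rule sum.cong[OF refl])
    fix k assume k: "k \<in> {0..?n}"
    have "(\<Sum>A\<in>{A. A \<in> Pow N \<and> card A = k}. fact (card A) * fact (?n - card A) :: nat)
        = (\<Sum>A\<in>{A. A \<in> Pow N \<and> card A = k}. fact k * fact (?n - k))" by simp
    also have "\<dots> = card {A. A \<subseteq> N \<and> card A = k} * (fact k * fact (?n - k))" by simp
    also have "\<dots> = (?n choose k) * (fact k * fact (?n - k))" using n_subsets[OF fN] by simp
    also have "\<dots> = fact ?n" using binomial_fact_lemma[of k ?n] k by (simp add: mult_ac)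
    finally show "(\<Sum>A\<in>{A. A \<in> Pow N \<and> card A = k}. fact (card A) * fact (?n - card A)) = (fact ?n :: nat)" .
  qed
  also have "\<dots> = fact (?n + 1)" by simp
  finally show ?thesis .
qed

definition V :: "nat set \<Rightarrow> tr set" where "V L = {t. valid t \<and> leaves t = L}"

lemma V_single: "V {x} = {Lf x}"
  using single_leaf unfolding V_def by auto

lemma count: "finite L \<Longrightarrow> L \<noteq> {} \<Longrightarrow> finite (V L) \<and> card (V L) = fact (card L - 1)"
proof (induction "card L" arbitrary: L rule: less_induct)
  case less
  show ?case
  proof (cases "card L = 1")
    case True
    then obtain x where "L = {x}" using card_1_singletonE by blast
    then show ?thesis by (simp add: V_single)
  next
    case False
    then have c2: "card L \<ge> 2" using less.prems by (metis One_nat_def card_0_eq less_2_cases not_less)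
    define m where "m = Min L"
    define M where "M = Max L"
    have mL: "m \<in> L" "M \<in> L" using less.prems m_def M_def by auto
    have mM: "m < M"
    proof -
      have "\<not> L \<subseteq> {m}"
      proof
        assume "L \<subseteq> {m}"
        then have "card L \<le> card {m}" using card_mono[of "{m}" L] by simp
        then show False using c2 by simp
      qed
      then obtain y where "y \<in> L" "y \<noteq> m" by blast
      moreover have "m \<le> y" "y \<le> M" using less.prems m_def M_def \<open>y \<in> L\<close> by auto
      ultimately show ?thesis by linarith
    qed
    define S where "S = {A. A \<subseteq> L \<and> m \<in> A \<and> M \<notin> A}"
    define g where "g = (\<lambda>(l,r). Nd l r)"
    have "S \<subseteq> Pow L" unfolding S_def by auto
    then have fS: "finite S" using less.prems finite_subset by blast
    have eqU: "V L = (\<Union>A\<in>S. g ` (V A \<times> V (L - A)))"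
    proof
      show "V L \<subseteq> (\<Union>A\<in>S. g ` (V A \<times> V (L - A)))"
      proof
        fix t assume t: "t \<in> V L"
        then have vt: "valid t" and lt: "leaves t = L" unfolding V_def by auto
        show "t \<in> (\<Union>A\<in>S. g ` (V A \<times> V (L - A)))"
        proof (cases t)
          case (Lf x)
          then have "card L = 1" using lt by auto
          then show ?thesis using c2 by simp
        next
          case (Nd l r)
          have mm: "lo t = m" "hi t = M" using lo_hi_minmax[OF vt] lt m_def M_def by auto
          have "m \<in> leaves l" using mm Nd lo_in[of l] by simp
          moreover have "M \<in> leaves r" using mm Nd hi_in[of r] by simp
          moreover have "leaves l \<inter> leaves r = {}" using vt Nd by simp
          ultimately have "leaves l \<in> S" using lt Nd unfolding S_def by auto
          moreover have "l \<in> V (leaves l)" "r \<in> V (L - leaves l)"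
            using vt Nd lt unfolding V_def by auto
          ultimately show ?thesis unfolding g_def using Nd by force
        qed
      qed
    next
      show "(\<Union>A\<in>S. g ` (V A \<times> V (L - A))) \<subseteq> V L"
      proof safe
        fix A l r assume A: "A \<in> S" and l: "l \<in> V A" and r: "r \<in> V (L - A)"
        have fA: "finite A" "finite (L - A)" using A less.prems finite_subset[of A L] unfolding S_def by auto
        have ml: "lo l = Min A" "hi l = Max A" using l lo_hi_minmax unfolding V_def by auto
        have mr: "lo r = Min (L - A)" "hi r = Max (L - A)" using r lo_hi_minmax unfolding V_def by auto
        have AS: "A \<subseteq> L" "m \<in> A" "M \<notin> A" using A S_def by auto
        have fL: "finite L" using less.prems by simp
        have neA: "A \<noteq> {}" "L - A \<noteq> {}" using AS mL by auto
        have i1: "Min A \<in> A" "Max A \<in> A" using Min_in[OF fA(1) neA(1)] Max_in[OF fA(1) neA(1)] by auto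
        have i2: "Min (L - A) \<in> L - A" "Max (L - A) \<in> L - A" using Min_in[OF fA(2) neA(2)] Max_in[OF fA(2) neA(2)] by auto
        have "Min A \<le> m" using fA AS by (intro Min_le) auto
        moreover have "m \<le> Min A" using i1 AS fL m_def by (metis Min_le subsetD)
        moreover have "m \<le> Min (L - A)" using i2 fL m_def by (metis Min_le DiffD1)
        moreover have "Min (L - A) \<noteq> m" using i2 AS by auto
        ultimately have lt1: "Min A < Min (L - A)" by linarith
        have "M \<le> Max (L - A)" using fA AS mL by (intro Max_ge) auto
        moreover have "Max (L - A) \<le> M" using i2 fL M_def by (metis Max_ge DiffD1)
        moreover have "Max A \<le> M" using i1 AS fL M_def by (metis Max_ge subsetD)
        moreover have "Max A \<noteq> M" using i1 AS by auto
        ultimately have lt2: "Max A < Max (L - A)" by linarith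
        have "leaves (Nd l r) = L" using l r AS unfolding V_def by auto
        then show "g (l, r) \<in> V L" using l r AS lt1 lt2 ml mr
          unfolding g_def V_def by auto
      qed
    qed
    have fin: "finite (V A) \<and> card (V A) = fact (card A - 1)"
      "finite (V (L - A)) \<and> card (V (L - A)) = fact (card (L - A) - 1)" if "A \<in> S" for A
    proof -
      have "A \<subseteq> L" "m \<in> A" "M \<notin> A" using that S_def by auto
      then have "A \<subset> L" using mL by auto
      then have "card A < card L" using less.prems psubset_card_mono by auto
      then show "finite (V A) \<and> card (V A) = fact (card A - 1)"
        using less.hyps[of A] \<open>m \<in> A\<close> \<open>A \<subset> L\<close> less.prems finite_subset[of A L] by auto
      have "L - A \<subset> L" using \<open>m \<in> A\<close> mL by auto
      then have "card (L - A) < card L" using less.prems psubset_card_mono by auto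
      then show "finite (V (L - A)) \<and> card (V (L - A)) = fact (card (L - A) - 1)"
        using less.hyps[of "L - A"] \<open>M \<notin> A\<close> mL less.prems by auto
    qed
    have ginj: "inj_on g X" for X unfolding g_def inj_on_def by auto
    have finU: "finite (V L)" unfolding eqU using fS fin by auto
    have "card (V L) = (\<Sum>A\<in>S. card (g ` (V A \<times> V (L - A))))"
      unfolding eqU
    proof (rule card_UN_disjoint[OF fS])
      show "\<forall>A\<in>S. finite (g ` (V A \<times> V (L - A)))" using fin by auto
      show "\<forall>A\<in>S. \<forall>B\<in>S. A \<noteq> B \<longrightarrow> g ` (V A \<times> V (L - A)) \<inter> g ` (V B \<times> V (L - B)) = {}"
        unfolding g_def V_def by auto
    qed
    also have "\<dots> = (\<Sum>A\<in>S. fact (card A - 1) * fact (card (L - A) - 1))"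
      by (rule sum.cong[OF refl]) (simp add: card_image[OF ginj] card_cartesian_product fin)
    also have "\<dots> = (\<Sum>B\<in>Pow (L - {m, M}). fact (card B) * fact (card (L - {m,M}) - card B))"
    proof -
      have S_eq: "S = insert m ` Pow (L - {m, M})"
      proof
        show "S \<subseteq> insert m ` Pow (L - {m, M})"
        proof
          fix A assume "A \<in> S"
          then have "A = insert m (A - {m})" "A - {m} \<in> Pow (L - {m, M})" unfolding S_def by auto
          then show "A \<in> insert m ` Pow (L - {m, M})" by (rule image_eqI)
        qed
        show "insert m ` Pow (L - {m, M}) \<subseteq> S" unfolding S_def using mL mM by auto
      qed
      have inj: "inj_on (insert m) (Pow (L - {m, M}))" unfolding inj_on_def by auto
      have "(\<Sum>A\<in>S. fact (card A - 1) * fact (card (L - A) - 1))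
          = (\<Sum>B\<in>Pow (L - {m, M}). fact (card (insert m B) - 1) * fact (card (L - insert m B) - 1))"
        unfolding S_eq by (rule sum.reindex[OF inj, unfolded comp_def])
      also have "\<dots> = (\<Sum>B\<in>Pow (L - {m, M}). fact (card B) * fact (card (L - {m,M}) - card B))"
      proof (rule sum.cong[OF refl])
        fix B assume B: "B \<in> Pow (L - {m, M})"
        have fB: "finite B" using B less.prems finite_subset[of B L] by auto
        have "m \<notin> B" using B by auto
        then have c1: "card (insert m B) = card B + 1" using fB by simp
        have "L - insert m B = insert M ((L - {m,M}) - B)" using B mL mM by auto
        then have c2: "card (L - insert m B) = card (L - {m,M}) - card B + 1"
          using B less.prems by (simp add: card_Diff_subset fB)
        show "fact (card (insert m B) - 1) * fact (card (L - insert m B) - 1)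
            = fact (card B) * fact (card (L - {m,M}) - card B)" using c1 c2 by simp
      qed
      finally show ?thesis .
    qed
    also have "\<dots> = fact (card (L - {m, M}) + 1)" using pow_sum less.prems by auto
    also have "\<dots> = fact (card L - 1)"
    proof -
      have "card (L - {m, M}) = card L - 2" using mL mM less.prems by (simp add: card_Diff_subset)
      moreover obtain q where "card L = Suc (Suc q)" using c2 by (metis add_2_eq_Suc le_Suc_ex)
      ultimately show ?thesis by simp
    qed
    finally show ?thesis using finU by simp
  qed
qed


fun subtrees :: "tr \<Rightarrow> tr set" where
  "subtrees (Lf x) = {Lf x}"
| "subtrees (Nd l r) = insert (Nd l r) (subtrees l \<union> subtrees r)"

definition has_ch :: "nat \<Rightarrow> tr \<Rightarrow> bool" where
  "has_ch i t \<longleftrightarrow> Nd (Lf i) (Lf (Suc i)) \<in> subtrees t"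

lemma pos_subtrees: "pos t = (\<lambda>s. (lo s, hi s)) ` subtrees t"
  by (induction t) auto

lemma subtrees_valid: "valid t \<Longrightarrow> s \<in> subtrees t \<Longrightarrow> valid s \<and> leaves s \<subseteq> leaves t"
  by (induction t) auto

lemma ch_pos: "valid t \<Longrightarrow> (i, Suc i) \<in> pos t \<longleftrightarrow> has_ch i t"
proof
  assume v: "valid t" and p: "(i, Suc i) \<in> pos t"
  then obtain s where s: "s \<in> subtrees t" "lo s = i" "hi s = Suc i"
    unfolding pos_subtrees by auto
  have vs: "valid s" using subtrees_valid[OF v s(1)] by simp
  show "has_ch i t"
  proof (cases s)
    case (Lf x) then show ?thesis using s by simp
  next
    case (Nd l r)
    have mm: "lo s = Min (leaves s)" "hi s = Max (leaves s)" using lo_hi_minmax[OF vs] by auto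
    have "leaves s \<subseteq> {i, Suc i}"
    proof
      fix x assume "x \<in> leaves s"
      then have "i \<le> x" "x \<le> Suc i" using mm s by auto
      then show "x \<in> {i, Suc i}" by auto
    qed
    moreover have d: "leaves l \<inter> leaves r = {}" "lo l = i" "hi r = Suc i"
      using vs Nd s by auto
    moreover have "lo l \<in> leaves l" "hi r \<in> leaves r" by (rule lo_in, rule hi_in)
    ultimately have "leaves l = {i}" "leaves r = {Suc i}" using Nd by auto
    then have "l = Lf i" "r = Lf (Suc i)" using single_leaf vs Nd by auto
    then show ?thesis using s Nd unfolding has_ch_def by simp
  qed
next
  assume "has_ch i t"
  then show "(i, Suc i) \<in> pos t" unfolding has_ch_def pos_subtrees by force
qed

fun ex :: "nat \<Rightarrow> tr \<Rightarrow> tr" where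
  "ex c (Lf x) = (if x = c then Nd (Lf c) (Lf (Suc c)) else Lf x)"
| "ex c (Nd l r) = Nd (ex c l) (ex c r)"

fun ct :: "nat \<Rightarrow> tr \<Rightarrow> tr" where
  "ct c (Lf x) = Lf x"
| "ct c (Nd l r) = (if l = Lf c \<and> r = Lf (Suc c) then Lf c else Nd (ct c l) (ct c r))"

lemma ex_Lf: "ex c t = Lf y \<longleftrightarrow> t = Lf y \<and> y \<noteq> c"
  by (cases t) auto

lemma ex_Lf': "Lf y = ex c t \<longleftrightarrow> t = Lf y \<and> y \<noteq> c"
  by (cases t) auto

lemma leaves_ex: "leaves (ex c t) = leaves t \<union> (if c \<in> leaves t then {Suc c} else {})"
  by (induction t) auto

lemma lo_ex: "lo (ex c t) = lo t" by (induction t) auto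
lemma hi_ex: "hi (ex c t) = (if hi t = c then Suc c else hi t)" by (induction t) auto

lemma valid_ex: "valid t \<Longrightarrow> Suc c \<notin> leaves t \<Longrightarrow> valid (ex c t)"
proof (induction t)
  case (Lf x) then show ?case by simp
next
  case (Nd l r)
  have h: "valid l" "valid r" "leaves l \<inter> leaves r = {}" "lo l < lo r" "hi l < hi r"
    using Nd.prems by auto
  have "hi r \<in> leaves r" by (rule hi_in)
  then have "hi r \<noteq> Suc c" using Nd.prems by auto
  then have "hi (ex c l) < hi (ex c r)" using h(5) by (auto simp: hi_ex)
  moreover have "leaves (ex c l) \<inter> leaves (ex c r) = {}"
    using h(3) Nd.prems by (auto simp: leaves_ex)
  ultimately show ?case using Nd h by (auto simp: lo_ex)
qed

lemma has_ch_ex: "has_ch i (ex c t) \<longleftrightarrow> (i = c \<and> c \<in> leaves t) \<or> (i \<noteq> c \<and> Suc i \<noteq> c \<and> has_ch i t)"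
  unfolding has_ch_def
proof (induction t)
  case (Lf x) then show ?case by auto
next
  case (Nd l r)
  then show ?case by (auto simp: ex_Lf ex_Lf')
qed

lemma ct_ex: "Suc c \<notin> leaves t \<Longrightarrow> ct c (ex c t) = t"
proof (induction t)
  case (Lf x) then show ?case by simp
next
  case (Nd l r)
  have "\<not> (ex c r = Lf (Suc c))" using Nd.prems by (auto simp: ex_Lf)
  then show ?case using Nd by auto
qed

lemma ex_id: "c \<notin> leaves t \<Longrightarrow> ex c t = t" by (induction t) auto
lemma ct_id: "c \<notin> leaves t \<Longrightarrow> ct c t = t" by (induction t) auto

lemma has_ch_leaves: "has_ch c t \<Longrightarrow> c \<in> leaves t \<and> Suc c \<in> leaves t"
  unfolding has_ch_def by (induction t) auto

lemma ex_ct: "valid t \<Longrightarrow> has_ch c t \<Longrightarrow> ex c (ct c t) = t"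
proof (induction t)
  case (Lf x) then show ?case by (simp add: has_ch_def)
next
  case (Nd l r)
  show ?case
  proof (cases "l = Lf c \<and> r = Lf (Suc c)")
    case True then show ?thesis by simp
  next
    case False
    have d: "leaves l \<inter> leaves r = {}" "valid l" "valid r" using Nd.prems by auto
    have "has_ch c l \<or> has_ch c r" using Nd.prems False unfolding has_ch_def by auto
    then show ?thesis
    proof
      assume hl: "has_ch c l"
      then have "c \<notin> leaves r" using has_ch_leaves d by blast
      then show ?thesis using Nd.IH(1)[OF d(2) hl] False by (simp add: ct_id ex_id)
    next
      assume hr: "has_ch c r"
      then have "c \<notin> leaves l" using has_ch_leaves d by blast
      then show ?thesis using Nd.IH(2)[OF d(3) hr] False by (simp add: ct_id ex_id)
    qed
  qed
qed

lemma ct_props: "valid t \<Longrightarrow> has_ch c t \<Longrightarrow>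
  valid (ct c t) \<and> leaves (ct c t) = leaves t - {Suc c} \<and> lo (ct c t) = lo t \<and>
  hi (ct c t) = (if hi t = Suc c then c else hi t)"
proof (induction t)
  case (Lf x) then show ?case by (simp add: has_ch_def)
next
  case (Nd l r)
  show ?case
  proof (cases "l = Lf c \<and> r = Lf (Suc c)")
    case True then show ?thesis by auto
  next
    case False
    have d: "leaves l \<inter> leaves r = {}" "valid l" "valid r" "lo l < lo r" "hi l < hi r"
      using Nd.prems by auto
    have "has_ch c l \<or> has_ch c r" using Nd.prems False unfolding has_ch_def by auto
    then show ?thesis
    proof
      assume hl: "has_ch c l"
      then have cl: "c \<in> leaves l" "Suc c \<in> leaves l" using has_ch_leaves by auto
      then have "c \<notin> leaves r" "Suc c \<notin> leaves r" using d by auto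
      then have cr: "ct c r = r" by (simp add: ct_id)
      have "hi r \<noteq> Suc c" using hi_in[of r] \<open>Suc c \<notin> leaves r\<close> by auto
      then show ?thesis using Nd.IH(1)[OF d(2) hl] False d cr \<open>Suc c \<notin> leaves r\<close> by auto
    next
      assume hr: "has_ch c r"
      then have cl: "c \<in> leaves r" "Suc c \<in> leaves r" using has_ch_leaves by auto
      then have "c \<notin> leaves l" "Suc c \<notin> leaves l" using d by auto
      then have cr: "ct c l = l" by (simp add: ct_id)
      have "hi l \<noteq> c" using hi_in[of l] \<open>c \<notin> leaves l\<close> by auto
      then have "hi l < (if hi r = Suc c then c else hi r)" using d(5) by auto
      then show ?thesis using Nd.IH(2)[OF d(3) hr] False d cr \<open>Suc c \<notin> leaves l\<close> by auto
    qed
  qed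
qed

definition Hs :: "nat set \<Rightarrow> nat \<Rightarrow> tr set" where
  "Hs L k = {t. valid t \<and> leaves t = L \<and> (\<forall>i\<in>{1..k}. \<not> has_ch i t)}"
definition Fs :: "nat set \<Rightarrow> nat \<Rightarrow> tr set" where
  "Fs L k = {t \<in> Hs L k. has_ch (Suc k) t}"

lemma Hs0: "Hs L 0 = V L" unfolding Hs_def V_def by auto

lemma Hs_Suc: "Hs L (Suc k) = Hs L k - Fs L k"
proof -
  have "{1..Suc k} = insert (Suc k) {1..k}" by auto
  then show ?thesis unfolding Hs_def Fs_def by auto
qed

lemma Fs_sub: "Fs L k \<subseteq> Hs L k" unfolding Fs_def by auto

lemma Fs_eq: "Suc (Suc k) \<in> L \<Longrightarrow> Suc k \<in> L \<Longrightarrow>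
  Fs L k = ex (Suc k) ` Hs (L - {Suc (Suc k)}) (k - 1)"
proof
  assume L: "Suc (Suc k) \<in> L" "Suc k \<in> L"
  show "Fs L k \<subseteq> ex (Suc k) ` Hs (L - {Suc (Suc k)}) (k - 1)"
  proof
    fix t assume t: "t \<in> Fs L k"
    then have v: "valid t" "leaves t = L" "has_ch (Suc k) t" "\<forall>i\<in>{1..k}. \<not> has_ch i t"
      unfolding Fs_def Hs_def by auto
    have P: "valid (ct (Suc k) t) \<and> leaves (ct (Suc k) t) = L - {Suc (Suc k)}"
      using ct_props[OF v(1) v(3)] v(2) by auto
    have "\<forall>i\<in>{1..k-1}. \<not> has_ch i (ct (Suc k) t)"
    proof (intro ballI notI)
      fix i assume i: "i \<in> {1..k-1}" and h: "has_ch i (ct (Suc k) t)"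
      then have "has_ch i (ex (Suc k) (ct (Suc k) t))" using has_ch_ex by auto
      then show False using ex_ct[OF v(1) v(3)] v(4) i by auto
    qed
    then have "ct (Suc k) t \<in> Hs (L - {Suc (Suc k)}) (k - 1)" using P unfolding Hs_def by auto
    then show "t \<in> ex (Suc k) ` Hs (L - {Suc (Suc k)}) (k - 1)"
      using ex_ct[OF v(1) v(3)] by (metis image_eqI)
  qed
next
  assume L: "Suc (Suc k) \<in> L" "Suc k \<in> L"
  show "ex (Suc k) ` Hs (L - {Suc (Suc k)}) (k - 1) \<subseteq> Fs L k"
  proof
    fix t assume "t \<in> ex (Suc k) ` Hs (L - {Suc (Suc k)}) (k - 1)"
    then obtain s where s: "t = ex (Suc k) s" "valid s" "leaves s = L - {Suc (Suc k)}"
      "\<forall>i\<in>{1..k-1}. \<not> has_ch i s" unfolding Hs_def by auto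
    have "valid t" using valid_ex s by auto
    moreover have "leaves t = L" using s L by (auto simp: leaves_ex)
    moreover have "has_ch (Suc k) t" using s L by (auto simp: has_ch_ex)
    moreover have "\<forall>i\<in>{1..k}. \<not> has_ch i t"
    proof (intro ballI notI)
      fix i assume i: "i \<in> {1..k}" and h: "has_ch i t"
      then have "Suc i \<noteq> Suc k" "has_ch i s" using s has_ch_ex by auto
      then show False using s(4) i by auto
    qed
    ultimately show "t \<in> Fs L k" unfolding Fs_def Hs_def by auto
  qed
qed

lemma card_Fs: "Suc (Suc k) \<in> L \<Longrightarrow> Suc k \<in> L \<Longrightarrow>
  card (Fs L k) = card (Hs (L - {Suc (Suc k)}) (k - 1))"
proof -
  assume L: "Suc (Suc k) \<in> L" "Suc k \<in> L"
  have "inj_on (ex (Suc k)) (Hs (L - {Suc (Suc k)}) (k - 1))"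
    by (rule inj_on_inverseI[where g = "ct (Suc k)"]) (auto simp: Hs_def ct_ex)
  then show ?thesis using Fs_eq[OF L] card_image by metis
qed


definition trm :: "nat \<Rightarrow> nat \<Rightarrow> nat \<Rightarrow> int" where
  "trm m k j = int ((k - j) choose j) * (-1) ^ j * int (fact (m - 2 - j))"

definition ph :: "nat \<Rightarrow> nat \<Rightarrow> int" where
  "ph m k = (\<Sum>j=0..k. int ((k - j) choose j) * (-1) ^ j * int (fact (m - 2 - j)))"

lemma ph_trm: "ph m k = (\<Sum>j<Suc k. trm m k j)"
  unfolding ph_def trm_def by (simp add: atLeast0AtMost lessThan_Suc_atMost)

lemma trm_zero: "k < j \<Longrightarrow> trm m k j = 0"
  unfolding trm_def by simp

lemma ph_ext: "k < N \<Longrightarrow> ph m k = (\<Sum>j<N. trm m k j)"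
proof (induction N)
  case 0 then show ?case by simp
next
  case (Suc N)
  show ?case
  proof (cases "k < N")
    case True
    then show ?thesis using Suc trm_zero[of k N m] by simp
  next
    case False
    then have "N = k" using Suc.prems by simp
    then show ?thesis by (simp add: ph_trm)
  qed
qed

lemma ph0: "ph m 0 = int (fact (m - 2))" unfolding ph_def by simp
lemma ph1: "ph m (Suc 0) = int (fact (m - 2))"
proof -
  have "ph m (Suc 0) = (\<Sum>j<Suc (Suc 0). trm m (Suc 0) j)" by (rule ph_trm)
  also have "\<dots> = trm m (Suc 0) 0 + trm m (Suc 0) 1" by simp
  also have "\<dots> = int (fact (m - 2))" unfolding trm_def by simp
  finally show ?thesis .
qed

lemma binom_aux: "(Suc k - j) choose (Suc j) = ((k - j) choose j) + ((k - j) choose (Suc j))"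
proof (cases "j \<le> k")
  case True
  then have "Suc k - j = Suc (k - j)" by simp
  then show ?thesis by simp
next
  case False
  then show ?thesis by simp
qed

lemma ph_rec: "ph m (Suc (Suc k)) = ph m (Suc k) - ph (m - 1) k"
proof -
  have a: "ph m (Suc (Suc k)) = (\<Sum>j<Suc (Suc (Suc k)). trm m (Suc (Suc k)) j)"
    by (rule ph_ext) simp
  have b: "ph m (Suc k) = (\<Sum>j<Suc (Suc (Suc k)). trm m (Suc k) j)"
    by (rule ph_ext) simp
  have c: "ph (m - 1) k = (\<Sum>j<Suc (Suc k). trm (m - 1) k j)"
    by (rule ph_ext) simp
  have a': "ph m (Suc (Suc k)) = trm m (Suc (Suc k)) 0 + (\<Sum>j<Suc (Suc k). trm m (Suc (Suc k)) (Suc j))"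
    unfolding a by (rule sum.lessThan_Suc_shift)
  have b': "ph m (Suc k) = trm m (Suc k) 0 + (\<Sum>j<Suc (Suc k). trm m (Suc k) (Suc j))"
    unfolding b by (rule sum.lessThan_Suc_shift)
  have t: "trm m (Suc (Suc k)) (Suc j) = trm m (Suc k) (Suc j) - trm (m - 1) k j" for j
  proof -
    have f: "m - 2 - Suc j = m - 1 - 2 - j" by simp
    have "Suc (Suc k) - Suc j = Suc k - j" by simp
    then have "int ((Suc (Suc k) - Suc j) choose Suc j) = int ((k - j) choose j) + int ((Suc k - Suc j) choose Suc j)"
      using binom_aux[of k j] by simp
    then show ?thesis unfolding trm_def f by (simp add: algebra_simps)
  qed
  have "ph m (Suc (Suc k)) = trm m (Suc k) 0 + (\<Sum>j<Suc (Suc k). trm m (Suc k) (Suc j) - trm (m - 1) k j)"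
    unfolding a' t by (simp add: trm_def)
  also have "\<dots> = ph m (Suc k) - ph (m - 1) k"
    unfolding b' c sum_subtractf by simp
  finally show ?thesis .
qed

lemma ph_id: "ph m k = int (fact (m - 2)) - (\<Sum>s<k - 1. ph (m - 1) s)"
proof (induction k rule: nat_less_induct)
  case (1 k)
  show ?case
  proof (cases k)
    case 0 then show ?thesis by (simp add: ph0)
  next
    case (Suc k1)
    show ?thesis
    proof (cases k1)
      case 0 then show ?thesis using Suc by (simp add: ph1)
    next
      case (Suc k2)
      have "ph m k = ph m (Suc k2) - ph (m - 1) k2" using \<open>k = Suc k1\<close> Suc ph_rec by simp
      also have "ph m (Suc k2) = int (fact (m - 2)) - (\<Sum>s<k2. ph (m - 1) s)"
        using "1"[rule_format, of "Suc k2"] \<open>k = Suc k1\<close> Suc by simp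
      finally show ?thesis using \<open>k = Suc k1\<close> Suc by simp
    qed
  qed
qed


definition abv :: "(nat \<times> nat) set \<Rightarrow> nat \<times> nat \<Rightarrow> nat set" where
  "abv P x = {r. r < fst x \<and> (r, snd x) \<in> P}"
definition lft :: "(nat \<times> nat) set \<Rightarrow> nat \<times> nat \<Rightarrow> nat set" where
  "lft P x = {c. snd x < c \<and> (fst x, c) \<in> P}"
definition par :: "(nat \<times> nat) set \<Rightarrow> nat \<times> nat \<Rightarrow> nat \<times> nat" where
  "par P x = (if abv P x \<noteq> {} then (Max (abv P x), snd x) else (fst x, Min (lft P x)))"
definition chl :: "nat \<times> nat \<Rightarrow> (nat \<times> nat) set \<Rightarrow> nat \<times> nat \<Rightarrow> (nat \<times> nat) set" where
  "chl \<rho> P p = {q \<in> P. q \<noteq> \<rho> \<and> par P q = p}"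

definition good :: "nat set \<Rightarrow> (nat \<times> nat) set \<Rightarrow> bool" where
  "good L P \<longleftrightarrow> finite L \<and> L \<noteq> {} \<and> P \<subseteq> L \<times> L \<and> (Min L, Max L) \<in> P \<and>
    (\<forall>x\<in>P. x \<noteq> (Min L, Max L) \<longrightarrow> (abv P x \<noteq> {}) \<noteq> (lft P x \<noteq> {})) \<and>
    (\<forall>p\<in>P. card (chl (Min L, Max L) P p) = 0 \<or> card (chl (Min L, Max L) P p) = 2) \<and>
    {p\<in>P. chl (Min L, Max L) P p = {}} = {(l,l) | l. l \<in> L}"

lemma abv_fin: "finite P \<Longrightarrow> finite (abv P x)"
proof -
  assume "finite P"
  moreover have "abv P x \<subseteq> fst ` P" unfolding abv_def by force
  ultimately show ?thesis by (meson finite_imageI finite_subset)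
qed

lemma lft_fin: "finite P \<Longrightarrow> finite (lft P x)"
proof -
  assume "finite P"
  moreover have "lft P x \<subseteq> snd ` P" unfolding lft_def by force
  ultimately show ?thesis by (meson finite_imageI finite_subset)
qed

lemma good_finP: "good L P \<Longrightarrow> finite P"
  unfolding good_def using finite_subset[of P "L \<times> L"] by auto

lemma good_root_abv: "good L P \<Longrightarrow> abv P (Min L, Max L) = {}"
proof -
  assume g: "good L P"
  have "r \<notin> abv P (Min L, Max L)" for r
  proof
    assume "r \<in> abv P (Min L, Max L)"
    then have "r < Min L" "(r, Max L) \<in> P" unfolding abv_def by auto
    then have "r \<in> L" using g unfolding good_def by auto
    then have "Min L \<le> r" using g unfolding good_def by auto
    then show False using \<open>r < Min L\<close> by simp
  qed
  then show ?thesis by auto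
qed

lemma good_root_lft: "good L P \<Longrightarrow> lft P (Min L, Max L) = {}"
proof -
  assume g: "good L P"
  have "r \<notin> lft P (Min L, Max L)" for r
  proof
    assume "r \<in> lft P (Min L, Max L)"
    then have "Max L < r" "(Min L, r) \<in> P" unfolding lft_def by auto
    then have "r \<in> L" using g unfolding good_def by auto
    then have "r \<le> Max L" using g unfolding good_def by auto
    then show False using \<open>Max L < r\<close> by simp
  qed
  then show ?thesis by auto
qed

lemma par_in: "good L P \<Longrightarrow> x \<in> P \<Longrightarrow> x \<noteq> (Min L, Max L) \<Longrightarrow> par P x \<in> P"
proof -
  assume g: "good L P" and x: "x \<in> P" "x \<noteq> (Min L, Max L)"
  have fP: "finite P" using good_finP[OF g] .
  show ?thesis
  proof (cases "abv P x \<noteq> {}")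
    case True
    then have "Max (abv P x) \<in> abv P x" using Max_in abv_fin[OF fP] by blast
    then show ?thesis using True unfolding par_def abv_def by auto
  next
    case False
    then have "lft P x \<noteq> {}" using g x unfolding good_def by auto
    then have "Min (lft P x) \<in> lft P x" using Min_in lft_fin[OF fP] by blast
    then show ?thesis using False unfolding par_def lft_def by auto
  qed
qed

lemma good_single: "good {x} {(x,x)}"
proof -
  have a: "abv {(x,x)} (x,x) = {}" "lft {(x,x)} (x,x) = {}" unfolding abv_def lft_def by auto
  have "chl (x,x) {(x,x)} (x,x) = {}" unfolding chl_def by auto
  then show ?thesis unfolding good_def by auto
qed


lemma good_comp:
  assumes gA: "good A PA" and gB: "good B PB" and d: "A \<inter> B = {}"
    and m: "Min A < Min B" and M: "Max A < Max B"
  shows "good (A \<union> B) (insert (Min A, Max B) (PA \<union> PB))"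
proof -
  define P where "P = insert (Min A, Max B) (PA \<union> PB)"
  define \<rho> where "\<rho> = (Min A, Max B)"
  define \<rho>A where "\<rho>A = (Min A, Max A)"
  define \<rho>B where "\<rho>B = (Min B, Max B)"
  have fA: "finite A" "A \<noteq> {}" and fB: "finite B" "B \<noteq> {}" using gA gB unfolding good_def by auto
  have sA: "PA \<subseteq> A \<times> A" and sB: "PB \<subseteq> B \<times> B" using gA gB unfolding good_def by auto
  have rA: "\<rho>A \<in> PA" and rB: "\<rho>B \<in> PB" using gA gB unfolding good_def \<rho>A_def \<rho>B_def by auto
  have MinA: "Min A \<in> A" "Max A \<in> A" using fA by auto
  have MinB: "Min B \<in> B" "Max B \<in> B" using fB by auto
  have MLx: "Min (A \<union> B) = Min A" "Max (A \<union> B) = Max B"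
    using fA fB m M by (simp_all add: Min_Un Max_Un)
  have eA: "fst x \<in> A \<and> snd x \<in> A \<and> Min A \<le> fst x \<and> snd x \<le> Max A" if "x \<in> PA" for x
  proof -
    have "fst x \<in> A" "snd x \<in> A" using that sA by auto
    then show ?thesis using fA by auto
  qed
  have eB: "fst x \<in> B \<and> snd x \<in> B \<and> Min B \<le> fst x \<and> snd x \<le> Max B" if "x \<in> PB" for x
  proof -
    have "fst x \<in> B" "snd x \<in> B" using that sB by auto
    then show ?thesis using fB by auto
  qed
  have nA: "\<rho> \<notin> PA" using eA[of \<rho>] MinB d unfolding \<rho>_def by auto
  have nB: "\<rho> \<notin> PB" using eB[of \<rho>] MinA d unfolding \<rho>_def by auto
  have dP: "x \<in> PA \<Longrightarrow> x \<notin> PB" for x using eA eB d by blast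
  have k1: "abv P x = abv PA x" if "x \<in> PA" for x
  proof -
    have "snd x \<in> A" using eA that by auto
    then have "snd x \<notin> B" using d by auto
    then show ?thesis unfolding abv_def P_def using eB MinB by force
  qed
  have k2: "lft P x = lft PA x \<union> (if fst x = Min A then {Max B} else {})" if "x \<in> PA" for x
  proof -
    have "fst x \<in> A" "snd x < Max B" using eA[OF that] M by auto
    then have "fst x \<notin> B" using d by auto
    then show ?thesis unfolding lft_def P_def using eB \<open>snd x < Max B\<close> by force
  qed
  have k3: "abv P x = abv PB x \<union> (if snd x = Max B then {Min A} else {})" if "x \<in> PB" for x
  proof -
    have "snd x \<in> B" "Min A < fst x" using eB[OF that] m by auto
    then have "snd x \<notin> A" using d by auto
    then show ?thesis unfolding abv_def P_def using eA \<open>Min A < fst x\<close> by force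
  qed
  have k4: "lft P x = lft PB x" if "x \<in> PB" for x
  proof -
    have "fst x \<in> B" using eB that by auto
    then have "fst x \<notin> A" using d by auto
    then show ?thesis unfolding lft_def P_def using eA MinA by force
  qed
  have gP: "finite P" using good_finP[OF gA] good_finP[OF gB] unfolding P_def by auto
  have k5: "abv P \<rho> = {}" "lft P \<rho> = {}"
  proof -
    show "abv P \<rho> = {}"
    proof -
      have "r \<notin> abv P \<rho>" for r
      proof
        assume "r \<in> abv P \<rho>"
        then have "r < Min A" "(r, Max B) \<in> P" unfolding abv_def \<rho>_def by auto
        then show False using eA eB m unfolding P_def by force
      qed
      then show ?thesis by auto
    qed
    show "lft P \<rho> = {}"
    proof -
      have "r \<notin> lft P \<rho>" for r
      proof
        assume "r \<in> lft P \<rho>"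
        then have "Max B < r" "(Min A, r) \<in> P" unfolding lft_def \<rho>_def by auto
        then show False using eA eB M unfolding P_def by force
      qed
      then show ?thesis by auto
    qed
  qed
  have aA: "abv PA \<rho>A = {}" "lft PA \<rho>A = {}" using good_root_abv[OF gA] good_root_lft[OF gA] \<rho>A_def by auto
  have aB: "abv PB \<rho>B = {}" "lft PB \<rho>B = {}" using good_root_abv[OF gB] good_root_lft[OF gB] \<rho>B_def by auto
  have cA: "(abv PA x \<noteq> {}) \<noteq> (lft PA x \<noteq> {})" if "x \<in> PA" "x \<noteq> \<rho>A" for x
    using gA that unfolding good_def \<rho>A_def by auto
  have cB: "(abv PB x \<noteq> {}) \<noteq> (lft PB x \<noteq> {})" if "x \<in> PB" "x \<noteq> \<rho>B" for x
    using gB that unfolding good_def \<rho>B_def by auto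
  have lftA_lt: "c < Max B" if "c \<in> lft PA x" for c x
    using that eA M unfolding lft_def by force
  have abvB_gt: "Min A < r" if "r \<in> abv PB x" for r x
    using that eB m unfolding abv_def by force
  have p6a: "par P x = par PA x" if x: "x \<in> PA" "x \<noteq> \<rho>A" for x
  proof (cases "abv PA x \<noteq> {}")
    case True then show ?thesis unfolding par_def using k1[OF x(1)] by simp
  next
    case False
    then have ne: "lft PA x \<noteq> {}" using cA[OF x] by auto
    have fl: "finite (lft PA x)" using lft_fin good_finP[OF gA] by auto
    have "Min (lft P x) = Min (lft PA x)"
    proof (cases "fst x = Min A")
      case True
      have "Min (lft PA x) < Max B" using lftA_lt Min_in[OF fl ne] by blast
      then show ?thesis using k2[OF x(1)] True fl ne by (simp add: Min_insert)
    next
      case False then show ?thesis using k2[OF x(1)] by simp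
    qed
    then show ?thesis unfolding par_def using k1[OF x(1)] False by simp
  qed
  have p6b: "par P \<rho>A = \<rho>"
    unfolding par_def using k1[OF rA] k2[OF rA] aA unfolding \<rho>A_def \<rho>_def by simp
  have snd_B: "snd x \<noteq> Max B" if x: "x \<in> PB" "x \<noteq> \<rho>B" "abv PB x = {}" for x
  proof
    assume s: "snd x = Max B"
    have "fst x \<noteq> Min B" using x(2) s unfolding \<rho>B_def by (metis prod.collapse)
    then have "Min B < fst x" using eB[OF x(1)] by auto
    then have "Min B \<in> abv PB x" using rB s unfolding abv_def \<rho>B_def by auto
    then show False using x(3) by auto
  qed
  have p6c: "par P x = par PB x" if x: "x \<in> PB" "x \<noteq> \<rho>B" for x
  proof (cases "abv PB x \<noteq> {}")
    case True
    have fa: "finite (abv PB x)" using abv_fin good_finP[OF gB] by auto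
    have "Max (abv P x) = Max (abv PB x)"
    proof (cases "snd x = Max B")
      case True
      have "Min A < Max (abv PB x)" using abvB_gt Max_in[OF fa \<open>abv PB x \<noteq> {}\<close>] by blast
      then show ?thesis using k3[OF x(1)] True fa \<open>abv PB x \<noteq> {}\<close> by (simp add: Max_insert)
    next
      case False then show ?thesis using k3[OF x(1)] by simp
    qed
    moreover have "abv P x \<noteq> {}" using k3[OF x(1)] True by auto
    ultimately show ?thesis unfolding par_def using True by simp
  next
    case False
    then have "snd x \<noteq> Max B" using snd_B x by auto
    then show ?thesis unfolding par_def using k3[OF x(1)] k4[OF x(1)] False by simp
  qed
  have p6d: "par P \<rho>B = \<rho>"
    unfolding par_def using k3[OF rB] k4[OF rB] aB unfolding \<rho>B_def \<rho>_def by simp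
  have cond2: "(abv P x \<noteq> {}) \<noteq> (lft P x \<noteq> {})" if x: "x \<in> P" "x \<noteq> \<rho>" for x
  proof -
    have "x \<in> PA \<or> x \<in> PB" using x unfolding P_def \<rho>_def by auto
    then show ?thesis
    proof
      assume xA: "x \<in> PA"
      show ?thesis
      proof (cases "x = \<rho>A")
        case True then show ?thesis using k1[OF xA] k2[OF xA] aA \<rho>A_def by simp
      next
        case nr: False
        show ?thesis
        proof (cases "fst x = Min A")
          case True
          have "abv PA x = {}" unfolding abv_def using True eA by force
          then show ?thesis using k1[OF xA] k2[OF xA] True by auto
        next
          case F2: False then show ?thesis using k1[OF xA] k2[OF xA] cA[OF xA nr] by simp
        qed
      qed
    next
      assume xB: "x \<in> PB"
      show ?thesis
      proof (cases "x = \<rho>B")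
        case True then show ?thesis using k3[OF xB] k4[OF xB] aB \<rho>B_def by simp
      next
        case nr: False
        show ?thesis
        proof (cases "snd x = Max B")
          case True
          then have "abv PB x \<noteq> {}" using snd_B[OF xB nr] by auto
          then show ?thesis using k3[OF xB] k4[OF xB] cB[OF xB nr] by auto
        next
          case F2: False then show ?thesis using k3[OF xB] k4[OF xB] cB[OF xB nr] by simp
        qed
      qed
    qed
  qed
  have parA_in: "par PA x \<in> PA" if "x \<in> PA" "x \<noteq> \<rho>A" for x
    using par_in[OF gA] that \<rho>A_def by auto
  have parB_in: "par PB x \<in> PB" if "x \<in> PB" "x \<noteq> \<rho>B" for x
    using par_in[OF gB] that \<rho>B_def by auto
  have chA: "chl \<rho> P p = chl \<rho>A PA p" if p: "p \<in> PA" for p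
  proof (rule set_eqI)
    fix q
    show "q \<in> chl \<rho> P p \<longleftrightarrow> q \<in> chl \<rho>A PA p"
    proof
      assume q: "q \<in> chl \<rho> P p"
      then have q1: "q \<in> P" "q \<noteq> \<rho>" "par P q = p" unfolding chl_def by auto
      have "q \<notin> PB"
      proof
        assume qB: "q \<in> PB"
        show False
        proof (cases "q = \<rho>B")
          case True then show False using p6d q1 p nA by auto
        next
          case False then show False using p6c[OF qB False] parB_in[OF qB False] q1 p dP by auto
        qed
      qed
      then have qA: "q \<in> PA" using q1 unfolding P_def \<rho>_def by auto
      have "q \<noteq> \<rho>A" using p6b q1 p nA by auto
      then show "q \<in> chl \<rho>A PA p" using qA q1 p6a unfolding chl_def by auto
    next
      assume "q \<in> chl \<rho>A PA p"
      then have q: "q \<in> PA" "q \<noteq> \<rho>A" "par PA q = p" unfolding chl_def by auto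
      then show "q \<in> chl \<rho> P p" using p6a[OF q(1,2)] nA unfolding chl_def P_def by auto
    qed
  qed
  have chB: "chl \<rho> P p = chl \<rho>B PB p" if p: "p \<in> PB" for p
  proof (rule set_eqI)
    fix q
    show "q \<in> chl \<rho> P p \<longleftrightarrow> q \<in> chl \<rho>B PB p"
    proof
      assume q: "q \<in> chl \<rho> P p"
      then have q1: "q \<in> P" "q \<noteq> \<rho>" "par P q = p" unfolding chl_def by auto
      have "q \<notin> PA"
      proof
        assume qA: "q \<in> PA"
        show False
        proof (cases "q = \<rho>A")
          case True then show False using p6b q1 p nB by auto
        next
          case False then show False using p6a[OF qA False] parA_in[OF qA False] q1 p dP by auto
        qed
      qed
      then have qB: "q \<in> PB" using q1 unfolding P_def \<rho>_def by auto
      have "q \<noteq> \<rho>B" using p6d q1 p nB by auto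
      then show "q \<in> chl \<rho>B PB p" using qB q1 p6c unfolding chl_def by auto
    next
      assume "q \<in> chl \<rho>B PB p"
      then have q: "q \<in> PB" "q \<noteq> \<rho>B" "par PB q = p" unfolding chl_def by auto
      then show "q \<in> chl \<rho> P p" using p6c[OF q(1,2)] nB unfolding chl_def P_def by auto
    qed
  qed
  have chR: "chl \<rho> P \<rho> = {\<rho>A, \<rho>B}"
  proof (rule set_eqI)
    fix q
    show "q \<in> chl \<rho> P \<rho> \<longleftrightarrow> q \<in> {\<rho>A, \<rho>B}"
    proof
      assume q: "q \<in> chl \<rho> P \<rho>"
      then have q1: "q \<in> P" "q \<noteq> \<rho>" "par P q = \<rho>" unfolding chl_def by auto
      then have "q \<in> PA \<or> q \<in> PB" unfolding P_def \<rho>_def by auto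
      then show "q \<in> {\<rho>A, \<rho>B}"
      proof
        assume qA: "q \<in> PA"
        show ?thesis
        proof (rule ccontr)
          assume "q \<notin> {\<rho>A, \<rho>B}"
          then show False using p6a[OF qA] parA_in[OF qA] q1 nA by auto
        qed
      next
        assume qB: "q \<in> PB"
        show ?thesis
        proof (rule ccontr)
          assume "q \<notin> {\<rho>A, \<rho>B}"
          then show False using p6c[OF qB] parB_in[OF qB] q1 nB by auto
        qed
      qed
    next
      assume "q \<in> {\<rho>A, \<rho>B}"
      then show "q \<in> chl \<rho> P \<rho>" using p6b p6d rA rB nA nB unfolding chl_def P_def by auto
    qed
  qed
  have rAB: "\<rho>A \<noteq> \<rho>B" using m unfolding \<rho>A_def \<rho>B_def by auto
  have cardA: "card (chl \<rho>A PA p) = 0 \<or> card (chl \<rho>A PA p) = 2" if "p \<in> PA" for p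
    using gA that unfolding good_def \<rho>A_def by auto
  have cardB: "card (chl \<rho>B PB p) = 0 \<or> card (chl \<rho>B PB p) = 2" if "p \<in> PB" for p
    using gB that unfolding good_def \<rho>B_def by auto
  have card2: "\<forall>p\<in>P. card (chl \<rho> P p) = 0 \<or> card (chl \<rho> P p) = 2"
  proof
    fix p assume "p \<in> P"
    then consider "p = \<rho>" | "p \<in> PA" | "p \<in> PB" unfolding P_def \<rho>_def by auto
    then show "card (chl \<rho> P p) = 0 \<or> card (chl \<rho> P p) = 2"
      by cases (use chR rAB chA cardA chB cardB in auto)
  qed
  have lvA: "{p\<in>PA. chl \<rho>A PA p = {}} = {(l,l) | l. l \<in> A}"
    using gA unfolding good_def \<rho>A_def by auto
  have lvB: "{p\<in>PB. chl \<rho>B PB p = {}} = {(l,l) | l. l \<in> B}"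
    using gB unfolding good_def \<rho>B_def by auto
  have lv: "{p\<in>P. chl \<rho> P p = {}} = {(l,l) | l. l \<in> A \<union> B}"
  proof -
    have "{p\<in>P. chl \<rho> P p = {}} = {p\<in>PA. chl \<rho>A PA p = {}} \<union> {p\<in>PB. chl \<rho>B PB p = {}}"
    proof (rule set_eqI)
      fix p
      show "p \<in> {p\<in>P. chl \<rho> P p = {}} \<longleftrightarrow> p \<in> {p\<in>PA. chl \<rho>A PA p = {}} \<union> {p\<in>PB. chl \<rho>B PB p = {}}"
      proof (cases "p \<in> PA")
        case True
        then have "chl \<rho> P p = chl \<rho>A PA p" "p \<in> P" "p \<notin> PB" using chA dP unfolding P_def by auto
        then show ?thesis using True by simp
      next
        case F: False
        show ?thesis
        proof (cases "p \<in> PB")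
          case True
          then have "chl \<rho> P p = chl \<rho>B PB p" "p \<in> P" using chB unfolding P_def by auto
          then show ?thesis using True F by simp
        next
          case False
          then have "p \<in> P \<Longrightarrow> p = \<rho>" using F unfolding P_def \<rho>_def by auto
          then show ?thesis using chR F False by auto
        qed
      qed
    qed
    then show ?thesis using lvA lvB by auto
  qed
  have sub: "P \<subseteq> (A \<union> B) \<times> (A \<union> B)" using sA sB MinA MinB unfolding P_def by auto
  show ?thesis
    unfolding good_def MLx P_def[symmetric] \<rho>_def[symmetric]
    using fA fB sub cond2 card2 lv unfolding P_def \<rho>_def by auto
qed


lemma valid_good: "valid t \<Longrightarrow> good (leaves t) (pos t)"
proof (induction t)
  case (Lf x) then show ?case using good_single by simp
next
  case (Nd l r)
  have v: "valid l" "valid r" "leaves l \<inter> leaves r = {}" "lo l < lo r" "hi l < hi r" using Nd.prems by auto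
  have mm: "lo l = Min (leaves l)" "hi l = Max (leaves l)" "lo r = Min (leaves r)" "hi r = Max (leaves r)"
    using lo_hi_minmax v by auto
  show ?case using good_comp[OF Nd.IH(1)[OF v(1)] Nd.IH(2)[OF v(2)] v(3)] v mm by simp
qed

inductive desc :: "nat \<times> nat \<Rightarrow> (nat \<times> nat) set \<Rightarrow> nat \<times> nat \<Rightarrow> nat \<times> nat \<Rightarrow> bool"
  for \<rho> P where
  d0: "p \<in> P \<Longrightarrow> desc \<rho> P p p"
| d1: "desc \<rho> P p q \<Longrightarrow> x \<in> chl \<rho> P q \<Longrightarrow> desc \<rho> P p x"

context
  fixes L P
  assumes g: "good L P"
begin

abbreviation "\<rho> \<equiv> (Min L, Max L)"
definition mu :: "nat \<times> nat \<Rightarrow> nat" where "mu x = (Max L - fst x) + snd x"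

lemma fL: "finite L" "L \<noteq> {}" using g unfolding good_def by auto
lemma PL: "x \<in> P \<Longrightarrow> fst x \<in> L \<and> snd x \<in> L" using g unfolding good_def by auto
lemma fP: "finite P" using good_finP[OF g] .
lemma rhoP: "\<rho> \<in> P" using g unfolding good_def by auto

lemma chl_D: "x \<in> chl \<rho> P q \<Longrightarrow> par P x = q \<and> x \<in> P \<and> x \<noteq> \<rho>"
  unfolding chl_def by auto

lemma par_geom: "x \<in> P \<Longrightarrow> x \<noteq> \<rho> \<Longrightarrow>
   (abv P x \<noteq> {} \<and> par P x = (Max (abv P x), snd x) \<and> Max (abv P x) < fst x) \<or>
   (abv P x = {} \<and> par P x = (fst x, Min (lft P x)) \<and> snd x < Min (lft P x) \<and> lft P x \<noteq> {})"
proof -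
  assume x: "x \<in> P" "x \<noteq> \<rho>"
  show ?thesis
  proof (cases "abv P x \<noteq> {}")
    case True
    then have "Max (abv P x) \<in> abv P x" using Max_in abv_fin[OF fP] by blast
    then show ?thesis using True unfolding par_def abv_def by auto
  next
    case False
    then have ne: "lft P x \<noteq> {}" using g x unfolding good_def by auto
    then have "Min (lft P x) \<in> lft P x" using Min_in lft_fin[OF fP] by blast
    then show ?thesis using False ne unfolding par_def lft_def by auto
  qed
qed

lemma mu_par: "x \<in> P \<Longrightarrow> x \<noteq> \<rho> \<Longrightarrow> mu x < mu (par P x)"
proof -
  assume x: "x \<in> P" "x \<noteq> \<rho>"
  have le: "fst x \<le> Max L" using PL[OF x(1)] fL by auto
  from par_geom[OF x] show ?thesis
  proof
    assume "abv P x \<noteq> {} \<and> par P x = (Max (abv P x), snd x) \<and> Max (abv P x) < fst x"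
    then show ?thesis unfolding mu_def using le by auto
  next
    assume "abv P x = {} \<and> par P x = (fst x, Min (lft P x)) \<and> snd x < Min (lft P x) \<and> lft P x \<noteq> {}"
    then show ?thesis unfolding mu_def using le by auto
  qed
qed

lemma desc_P: "desc \<rho> P p x \<Longrightarrow> x \<in> P \<and> mu x \<le> mu p \<and> (x \<noteq> p \<longrightarrow> mu x < mu p)"
proof (induction rule: desc.induct)
  case (d0 p) then show ?case by simp
next
  case (d1 p q x)
  then have x: "par P x = q" "x \<in> P" "x \<noteq> \<rho>" using chl_D by auto
  have "mu x < mu (par P x)" by (rule mu_par[OF x(2) x(3)])
  then have "mu x < mu q" using x(1) by simp
  then show ?case using d1 \<open>x \<in> P\<close> by auto
qed

lemma desc_last: "desc \<rho> P p x \<Longrightarrow> x \<noteq> p \<Longrightarrow> desc \<rho> P p (par P x) \<and> x \<in> chl \<rho> P (par P x)"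
proof (induction rule: desc.induct)
  case (d0 p) then show ?case by simp
next
  case (d1 p q x)
  have "par P x = q" using d1.hyps(2) chl_D by blast
  then show ?case using d1.hyps by simp
qed

lemma desc_trans: "desc \<rho> P q x \<Longrightarrow> desc \<rho> P p q \<Longrightarrow> desc \<rho> P p x"
  by (induction rule: desc.induct) (auto intro: d1)

lemma desc_cmp: "desc \<rho> P a x \<Longrightarrow> desc \<rho> P b x \<Longrightarrow> desc \<rho> P a b \<or> desc \<rho> P b a"
proof (induction arbitrary: b rule: desc.induct)
  case (d0 p) then show ?case by simp
next
  case (d1 p q x)
  show ?case
  proof (cases "x = b")
    case True then show ?thesis using d1.hyps desc.d1 by blast
  next
    case False
    then have "desc \<rho> P b (par P x)" using desc_last[OF d1.prems] by auto
    moreover have "par P x = q" using d1.hyps chl_D by auto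
    ultimately show ?thesis using d1.IH by auto
  qed
qed

lemma all_desc: "x \<in> P \<Longrightarrow> desc \<rho> P \<rho> x"
proof (induction "2 * Max L - mu x" arbitrary: x rule: less_induct)
  case less
  show ?case
  proof (cases "x = \<rho>")
    case True then show ?thesis using rhoP d0 by simp
  next
    case False
    have pin: "par P x \<in> P" using par_in[OF g less.prems False] .
    have lt: "mu x < mu (par P x)" using mu_par[OF less.prems False] .
    have "snd (par P x) \<le> Max L" using PL[OF pin] fL(1) by auto
    then have "mu (par P x) \<le> 2 * Max L" unfolding mu_def by auto
    then have "2 * Max L - mu (par P x) < 2 * Max L - mu x" using lt by auto
    then have "desc \<rho> P \<rho> (par P x)" using less.hyps pin by blast
    moreover have "x \<in> chl \<rho> P (par P x)" using less.prems False unfolding chl_def by auto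
    ultimately show ?thesis by (rule d1)
  qed
qed

lemma two_children:
  assumes p: "p \<in> P" and ne: "chl \<rho> P p \<noteq> {}"
  shows "\<exists>q1 q2. chl \<rho> P p = {q1, q2} \<and> snd q1 = snd p \<and> fst p < fst q1 \<and>
           fst q2 = fst p \<and> snd q2 < snd p"
proof -
  have fin: "finite (chl \<rho> P p)" unfolding chl_def using fP by simp
  have "\<forall>p\<in>P. card (chl \<rho> P p) = 0 \<or> card (chl \<rho> P p) = 2" using g unfolding good_def by blast
  then have "card (chl \<rho> P p) = 2" using p ne fin by auto
  then obtain a b where ab: "chl \<rho> P p = {a, b}" "a \<noteq> b" by (meson card_2_iff)
  have ty: "(snd x = snd p \<and> fst p < fst x \<and> abv P x \<noteq> {} \<and> Max (abv P x) = fst p) \<or>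
             (fst x = fst p \<and> snd x < snd p \<and> abv P x = {} \<and> Min (lft P x) = snd p)"
    if "x \<in> chl \<rho> P p" for x
  proof -
    have x: "par P x = p" "x \<in> P" "x \<noteq> \<rho>" using chl_D that by auto
    from par_geom[OF x(2,3)] show ?thesis using x(1) by auto
  qed
  have col2: False if "x \<in> chl \<rho> P p" "y \<in> chl \<rho> P p" "x \<noteq> y"
    "snd x = snd p" "fst p < fst x" "abv P x \<noteq> {}" "Max (abv P x) = fst p"
    "snd y = snd p" "fst p < fst y" "abv P y \<noteq> {}" "Max (abv P y) = fst p" for x y
  proof -
    have xy: "fst x \<noteq> fst y" using that by (auto simp: prod_eq_iff)
    have inP: "x \<in> P" "y \<in> P" using chl_D that by auto
    show False
    proof (cases "fst x < fst y")
      case True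
      then have "fst x \<in> abv P y" using inP that unfolding abv_def by (cases x, cases y) auto
      then have "fst x \<le> Max (abv P y)" using abv_fin[OF fP] by auto
      then show False using that by auto
    next
      case False
      then have "fst y < fst x" using xy by auto
      then have "fst y \<in> abv P x" using inP that unfolding abv_def by (cases x, cases y) auto
      then have "fst y \<le> Max (abv P x)" using abv_fin[OF fP] by auto
      then show False using that by auto
    qed
  qed
  have row2: False if "x \<in> chl \<rho> P p" "y \<in> chl \<rho> P p" "x \<noteq> y"
    "fst x = fst p" "snd x < snd p" "abv P x = {}" "Min (lft P x) = snd p"
    "fst y = fst p" "snd y < snd p" "abv P y = {}" "Min (lft P y) = snd p" for x y
  proof -
    have xy: "snd x \<noteq> snd y" using that by (auto simp: prod_eq_iff)
    have inP: "x \<in> P" "y \<in> P" using chl_D that by auto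
    show False
    proof (cases "snd x < snd y")
      case True
      then have "snd y \<in> lft P x" using inP that unfolding lft_def by (cases x, cases y) auto
      then have "Min (lft P x) \<le> snd y" using lft_fin[OF fP] by auto
      then show False using that by auto
    next
      case False
      then have "snd y < snd x" using xy by auto
      then have "snd x \<in> lft P y" using inP that unfolding lft_def by (cases x, cases y) auto
      then have "Min (lft P y) \<le> snd x" using lft_fin[OF fP] by auto
      then show False using that by auto
    qed
  qed
  have aa: "a \<in> chl \<rho> P p" "b \<in> chl \<rho> P p" using ab by auto
  from ty[OF aa(1)] ty[OF aa(2)] show ?thesis
  proof (elim disjE)
    assume "snd a = snd p \<and> fst p < fst a \<and> abv P a \<noteq> {} \<and> Max (abv P a) = fst p"
      "snd b = snd p \<and> fst p < fst b \<and> abv P b \<noteq> {} \<and> Max (abv P b) = fst p"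
    then show ?thesis using col2[OF aa ab(2)] by auto
  next
    assume "snd a = snd p \<and> fst p < fst a \<and> abv P a \<noteq> {} \<and> Max (abv P a) = fst p"
      "fst b = fst p \<and> snd b < snd p \<and> abv P b = {} \<and> Min (lft P b) = snd p"
    then show ?thesis by (intro exI[of _ a] exI[of _ b]) (use ab in auto)
  next
    assume "fst a = fst p \<and> snd a < snd p \<and> abv P a = {} \<and> Min (lft P a) = snd p"
      "snd b = snd p \<and> fst p < fst b \<and> abv P b \<noteq> {} \<and> Max (abv P b) = fst p"
    then show ?thesis by (intro exI[of _ b] exI[of _ a]) (use ab in auto)
  next
    assume "fst a = fst p \<and> snd a < snd p \<and> abv P a = {} \<and> Min (lft P a) = snd p"
      "fst b = fst p \<and> snd b < snd p \<and> abv P b = {} \<and> Min (lft P b) = snd p"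
    then show ?thesis using row2[OF aa ab(2)] by auto
  qed
qed

definition D :: "nat \<times> nat \<Rightarrow> (nat \<times> nat) set" where "D p = {x. desc \<rho> P p x}"

lemma D_split:
  assumes "chl \<rho> P p = {q1, q2}" "p \<in> P"
  shows "D p = insert p (D q1 \<union> D q2)"
proof (rule set_eqI)
  fix x
  show "x \<in> D p \<longleftrightarrow> x \<in> insert p (D q1 \<union> D q2)"
  proof
    assume "x \<in> D p"
    then have "desc \<rho> P p x" unfolding D_def by auto
    moreover have "desc \<rho> P a y \<Longrightarrow> a = p \<Longrightarrow> y \<in> insert p (D q1 \<union> D q2)" for a y
    proof (induction rule: desc.induct)
      case (d0 p') then show ?case by simp
    next
      case (d1 p' q x)
      then consider "q = p" | "q \<in> D q1" | "q \<in> D q2" by auto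
      then show ?case
      proof cases
        case 1 then have "x \<in> {q1, q2}" using d1.hyps assms by auto
        moreover have "q1 \<in> P" "q2 \<in> P" using assms chl_D by blast+
        then have "desc \<rho> P q1 q1" "desc \<rho> P q2 q2" by (auto intro: desc.d0)
        ultimately show ?thesis unfolding D_def by blast
      next
        case 2 then show ?thesis using d1.hyps desc.d1 unfolding D_def by blast
      next
        case 3 then show ?thesis using d1.hyps desc.d1 unfolding D_def by blast
      qed
    qed
    ultimately show "x \<in> insert p (D q1 \<union> D q2)" by blast
  next
    assume x: "x \<in> insert p (D q1 \<union> D q2)"
    have "desc \<rho> P p q1" "desc \<rho> P p q2" using assms desc.d0 desc.d1 by blast+
    then show "x \<in> D p" using x assms(2) desc.d0 desc_trans unfolding D_def by blast
  qed
qed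

lemma D_leaf: "chl \<rho> P p = {} \<Longrightarrow> p \<in> P \<Longrightarrow> D p = {p}"
proof -
  assume c: "chl \<rho> P p = {}" and p: "p \<in> P"
  have "desc \<rho> P a x \<Longrightarrow> a = p \<Longrightarrow> x = p" for a x
    by (induction rule: desc.induct) (use c in auto)
  moreover have "desc \<rho> P p p" using p by (rule desc.d0)
  ultimately show ?thesis unfolding D_def by blast
qed

lemma D_disj:
  assumes "chl \<rho> P p = {q1, q2}" "q1 \<noteq> q2"
  shows "D q1 \<inter> D q2 = {}"
proof (rule ccontr)
  assume "D q1 \<inter> D q2 \<noteq> {}"
  then obtain x where "desc \<rho> P q1 x" "desc \<rho> P q2 x" unfolding D_def by auto
  then have c: "desc \<rho> P q1 q2 \<or> desc \<rho> P q2 q1" using desc_cmp by blast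
  have pq: "par P q1 = p" "par P q2 = p" "q1 \<in> P" "q2 \<in> P" "q1 \<noteq> \<rho>" "q2 \<noteq> \<rho>"
    using assms chl_D by blast+
  have "mu q1 < mu p" "mu q2 < mu p" using mu_par[OF pq(3) pq(5)] mu_par[OF pq(4) pq(6)] pq(1,2) by auto
  from c show False
  proof
    assume "desc \<rho> P q1 q2"
    then have "desc \<rho> P q1 (par P q2)" using desc_last assms(2) by blast
    then have "desc \<rho> P q1 p" using pq by simp
    then show False using desc_P[OF \<open>desc \<rho> P q1 p\<close>] \<open>mu q1 < mu p\<close> by simp
  next
    assume "desc \<rho> P q2 q1"
    then have "desc \<rho> P q2 (par P q1)" using desc_last assms(2) by blast
    then have "desc \<rho> P q2 p" using pq by simp
    then show False using desc_P[OF \<open>desc \<rho> P q2 p\<close>] \<open>mu q2 < mu p\<close> by simp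
  qed
qed

lemma leaf_diag: "p \<in> P \<Longrightarrow> (chl \<rho> P p = {}) \<longleftrightarrow> (fst p = snd p)"
proof -
  assume p: "p \<in> P"
  have lv: "{p\<in>P. chl \<rho> P p = {}} = {(l,l) | l. l \<in> L}" using g unfolding good_def by (elim conjE) assumption
  obtain a b where ab: "p = (a, b)" by (cases p)
  have aL: "a \<in> L" using PL p ab by auto
  show ?thesis
  proof
    assume "chl \<rho> P p = {}"
    then have "p \<in> {(l,l) | l. l \<in> L}" using lv p by blast
    then show "fst p = snd p" by auto
  next
    assume "fst p = snd p"
    then have "p \<in> {(l,l) | l. l \<in> L}" using ab aL by auto
    then show "chl \<rho> P p = {}" using lv by blast
  qed
qed

lemma build: "p \<in> P \<Longrightarrow> \<exists>t. valid t \<and> pos t = D p \<and> lo t = fst p \<and> hi t = snd p \<and>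
     leaves t = {l. (l,l) \<in> D p}"
proof (induction "mu p" arbitrary: p rule: less_induct)
  case less
  show ?case
  proof (cases "chl \<rho> P p = {}")
    case True
    then have e: "fst p = snd p" using leaf_diag less.prems by auto
    have Dp: "D p = {p}" using D_leaf True less.prems by auto
    show ?thesis
      by (rule exI[of _ "Lf (fst p)"]) (use e Dp in \<open>auto simp: prod_eq_iff\<close>)
  next
    case False
    obtain q1 q2 where q: "chl \<rho> P p = {q1, q2}" "snd q1 = snd p" "fst p < fst q1"
      "fst q2 = fst p" "snd q2 < snd p"
      using two_children[OF less.prems False] by blast
    have qP: "q1 \<in> P" "q2 \<in> P" "q1 \<noteq> \<rho>" "q2 \<noteq> \<rho>" "par P q1 = p" "par P q2 = p"
      using q(1) chl_D by blast+
    have mq: "mu q1 < mu p" "mu q2 < mu p" using mu_par[OF qP(1) qP(3)] mu_par[OF qP(2) qP(4)] qP(5,6) by auto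
    have "snd p \<le> Max L" using PL[OF less.prems] fL(1) by auto
    then have bnd: "mu p \<le> 2 * Max L" unfolding mu_def by auto
    note dq = mq
    obtain t1 where t1: "valid t1" "pos t1 = D q1" "lo t1 = fst q1" "hi t1 = snd q1"
      "leaves t1 = {l. (l,l) \<in> D q1}"
      using less.hyps[OF dq(1) qP(1)] by blast
    obtain t2 where t2: "valid t2" "pos t2 = D q2" "lo t2 = fst q2" "hi t2 = snd q2"
      "leaves t2 = {l. (l,l) \<in> D q2}"
      using less.hyps[OF dq(2) qP(2)] by blast
    have ne: "q1 \<noteq> q2" using q by auto
    have dj: "D q1 \<inter> D q2 = {}" using D_disj[OF q(1) ne] .
    have Dp: "D p = insert p (D q1 \<union> D q2)" using D_split[OF q(1) less.prems] .
    have nd: "fst p \<noteq> snd p" using leaf_diag less.prems False by auto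
    have "valid (Nd t2 t1)" using t1 t2 dj q by auto
    moreover have "pos (Nd t2 t1) = D p" using t1 t2 q Dp by (simp add: Un_commute)
    moreover have "leaves (Nd t2 t1) = {l. (l,l) \<in> D p}" using t1 t2 Dp nd by auto
    ultimately show ?thesis using t1 t2 q by (intro exI[of _ "Nd t2 t1"]) auto
  qed
qed

lemma good_tree: "\<exists>t. valid t \<and> leaves t = L \<and> pos t = P"
proof -
  obtain t where t: "valid t" "pos t = D \<rho>" "leaves t = {l. (l,l) \<in> D \<rho>}"
    using build[OF rhoP] by auto
  have DP: "D \<rho> = P" using all_desc desc_P unfolding D_def by blast
  have lv: "{p\<in>P. chl \<rho> P p = {}} = {(l,l) | l. l \<in> L}" using g unfolding good_def by (elim conjE) assumption
  have "{l. (l,l) \<in> P} = L"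
  proof
    show "{l. (l,l) \<in> P} \<subseteq> L" using PL by force
    show "L \<subseteq> {l. (l,l) \<in> P}" using lv by blast
  qed
  then show ?thesis using t DP by auto
qed

end

lemma good_iff: "good L P \<longleftrightarrow> (\<exists>t. valid t \<and> leaves t = L \<and> pos t = P)"
  using good_tree valid_good by blast


definition sg :: "nat \<Rightarrow> nat \<times> nat \<Rightarrow> nat \<times> nat" where
  "sg n x = (fst x, Suc n - snd x)"

abbreviation box :: "nat \<Rightarrow> (nat \<times> nat) set" where "box n \<equiv> {1..n} \<times> {1..n}"

lemma sg_box: "x \<in> box n \<Longrightarrow> sg n x \<in> box n"
  unfolding sg_def by auto

lemma sg_sg: "x \<in> box n \<Longrightarrow> sg n (sg n x) = x"
  unfolding sg_def by (cases x) auto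

lemma sg_inj: "inj_on (sg n) (box n)"
  by (rule inj_on_inverseI[where g = "sg n"]) (rule sg_sg)

lemma sg_img_inj: "A \<subseteq> box n \<Longrightarrow> B \<subseteq> box n \<Longrightarrow> sg n ` A = sg n ` B \<Longrightarrow> A = B"
  using sg_inj inj_on_image_eq_iff by metis

context
  fixes n :: nat and T :: "(nat \<times> nat) set"
  assumes Tb: "T \<subseteq> box n"
begin

abbreviation "PP \<equiv> sg n ` T"

lemma memP: "y \<in> box n \<Longrightarrow> y \<in> PP \<longleftrightarrow> sg n y \<in> T"
proof
  assume y: "y \<in> box n" "y \<in> PP"
  then obtain z where "z \<in> T" "y = sg n z" by auto
  then show "sg n y \<in> T" using sg_sg Tb by auto
next
  assume y: "y \<in> box n" "sg n y \<in> T"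
  then show "y \<in> PP" using sg_sg[OF y(1)] by (metis image_eqI)
qed

lemma fT: "finite T" using Tb finite_subset by blast

lemma abv_sg: "x \<in> T \<Longrightarrow> abv PP (sg n x) = {i'. i' < fst x \<and> (i', snd x) \<in> T}"
proof -
  assume x: "x \<in> T"
  have xb: "fst x \<in> {1..n}" "snd x \<in> {1..n}" using x Tb by auto
  show ?thesis
  proof (rule set_eqI)
    fix r
    show "r \<in> abv PP (sg n x) \<longleftrightarrow> r \<in> {i'. i' < fst x \<and> (i', snd x) \<in> T}"
    proof
      assume "r \<in> abv PP (sg n x)"
      then have r: "r < fst x" "(r, Suc n - snd x) \<in> PP" unfolding abv_def sg_def by auto
      then obtain z where z: "z \<in> T" "(r, Suc n - snd x) = sg n z" by auto
      have "snd z \<in> {1..n}" using z Tb by auto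
      then have "snd z = snd x" using z xb unfolding sg_def by auto
      then have "z = (r, snd x)" using z unfolding sg_def by (cases z) auto
      then show "r \<in> {i'. i' < fst x \<and> (i', snd x) \<in> T}" using r z by auto
    next
      assume "r \<in> {i'. i' < fst x \<and> (i', snd x) \<in> T}"
      then have r: "r < fst x" "(r, snd x) \<in> T" by auto
      then have "sg n (r, snd x) \<in> PP" by auto
      then show "r \<in> abv PP (sg n x)" using r unfolding abv_def sg_def by auto
    qed
  qed
qed

lemma lft_sg: "x \<in> T \<Longrightarrow> lft PP (sg n x) = (\<lambda>j. Suc n - j) ` {j'. j' < snd x \<and> (fst x, j') \<in> T}"
proof -
  assume x: "x \<in> T"
  have xb: "fst x \<in> {1..n}" "snd x \<in> {1..n}" using x Tb by auto
  show ?thesis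
  proof (rule set_eqI)
    fix c
    show "c \<in> lft PP (sg n x) \<longleftrightarrow> c \<in> (\<lambda>j. Suc n - j) ` {j'. j' < snd x \<and> (fst x, j') \<in> T}"
    proof
      assume "c \<in> lft PP (sg n x)"
      then have c: "Suc n - snd x < c" "(fst x, c) \<in> PP" unfolding lft_def sg_def by auto
      then obtain z where z: "z \<in> T" "(fst x, c) = sg n z" by auto
      have zb: "snd z \<in> {1..n}" using z Tb by auto
      have "z = (fst x, snd z)" "c = Suc n - snd z" using z unfolding sg_def by (cases z, auto)+
      moreover have "snd z < snd x" using c(1) \<open>c = Suc n - snd z\<close> xb zb by auto
      ultimately show "c \<in> (\<lambda>j. Suc n - j) ` {j'. j' < snd x \<and> (fst x, j') \<in> T}" using z by auto
    next
      assume "c \<in> (\<lambda>j. Suc n - j) ` {j'. j' < snd x \<and> (fst x, j') \<in> T}"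
      then obtain j where j: "c = Suc n - j" "j < snd x" "(fst x, j) \<in> T" by auto
      have "j \<in> {1..n}" using j Tb by auto
      then have "Suc n - snd x < c" using j xb by auto
      moreover have "(fst x, c) \<in> PP" using j by (metis image_eqI sg_def fst_conv snd_conv)
      ultimately show "c \<in> lft PP (sg n x)" unfolding lft_def sg_def by auto
    qed
  qed
qed

lemma Min_rev: "S \<subseteq> {1..n} \<Longrightarrow> S \<noteq> {} \<Longrightarrow> Min ((\<lambda>j. Suc n - j) ` S) = Suc n - Max S"
proof -
  assume S: "S \<subseteq> {1..n}" "S \<noteq> {}"
  have fS: "finite S" using S finite_subset by blast
  have M: "Max S \<in> S" using Max_in fS S by blast
  show ?thesis
  proof (rule Min_eqI)
    show "finite ((\<lambda>j. Suc n - j) ` S)" using fS by simp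
    show "Suc n - Max S \<in> (\<lambda>j. Suc n - j) ` S" using M by auto
    fix y assume "y \<in> (\<lambda>j. Suc n - j) ` S"
    then obtain j where "j \<in> S" "y = Suc n - j" by auto
    moreover have "j \<le> Max S" using fS \<open>j \<in> S\<close> by auto
    ultimately show "Suc n - Max S \<le> y" by auto
  qed
qed

definition "AB x \<longleftrightarrow> (\<exists>i'<fst x. (i', snd x) \<in> T)"
definition "LF x \<longleftrightarrow> (\<exists>j'<snd x. (fst x, j') \<in> T)"

lemma AB_abv: "x \<in> T \<Longrightarrow> AB x \<longleftrightarrow> abv PP (sg n x) \<noteq> {}"
proof -
  assume x: "x \<in> T"
  show ?thesis unfolding abv_sg[OF x] AB_def by blast
qed

lemma LF_lft: "x \<in> T \<Longrightarrow> LF x \<longleftrightarrow> lft PP (sg n x) \<noteq> {}"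
proof -
  assume x: "x \<in> T"
  show ?thesis unfolding lft_sg[OF x] LF_def by blast
qed

lemma parent_sg: "x \<in> T \<Longrightarrow> AB x \<or> LF x \<Longrightarrow> sg n (cnm_parent T x) = par PP (sg n x) \<and> cnm_parent T x \<in> T"
proof -
  assume x: "x \<in> T" and c: "AB x \<or> LF x"
  show ?thesis
  proof (cases "AB x")
    case True
    have fa: "finite {i'. i' < fst x \<and> (i', snd x) \<in> T}" by simp
    have ne: "{i'. i' < fst x \<and> (i', snd x) \<in> T} \<noteq> {}" using True unfolding AB_def by auto
    define A where "A = {i'. i' < fst x \<and> (i', snd x) \<in> T}"
    have MA: "Max A \<in> A" using Max_in[OF fa ne] unfolding A_def .
    have cp: "cnm_parent T x = (Max A, snd x)" using True unfolding cnm_parent_def AB_def A_def by simp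
    have ab: "abv PP (sg n x) = A" using abv_sg[OF x] unfolding A_def .
    have pp: "par PP (sg n x) = (Max A, Suc n - snd x)"
      using ne unfolding par_def ab A_def[symmetric] by (simp add: sg_def)
    show ?thesis using cp pp MA unfolding A_def sg_def by auto
  next
    case False
    then have L: "LF x" using c by simp
    define S where "S = {j'. j' < snd x \<and> (fst x, j') \<in> T}"
    have S1: "S \<subseteq> {1..n}" using Tb unfolding S_def by auto
    have ne: "S \<noteq> {}" using L unfolding LF_def S_def by auto
    have fS: "finite S" using S1 finite_subset by blast
    have "Max S \<in> S" using Max_in[OF fS ne] .
    moreover have "abv PP (sg n x) = {}" using AB_abv[OF x] False by simp
    moreover have "\<not> (\<exists>i'<fst x. (i', snd x) \<in> T)" using False unfolding AB_def by simp
    moreover have "lft PP (sg n x) = (\<lambda>j. Suc n - j) ` S" using lft_sg[OF x] unfolding S_def .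
    ultimately have cp: "cnm_parent T x = (fst x, Max S)" and
      pp: "par PP (sg n x) = (fst x, Min ((\<lambda>j. Suc n - j) ` S))"
      unfolding cnm_parent_def par_def S_def by (simp_all add: sg_def)
    show ?thesis unfolding cp pp Min_rev[OF S1 ne] using \<open>Max S \<in> S\<close> unfolding S_def sg_def by auto
  qed
qed

definition "C2T \<longleftrightarrow> (\<forall>(i,j)\<in>T. (i,j) \<noteq> (1,1) \<longrightarrow> ((\<exists>i'<i. (i',j) \<in> T) \<noteq> (\<exists>j'<j. (i,j') \<in> T)))"
definition "C2P \<longleftrightarrow> (\<forall>x\<in>PP. x \<noteq> (1, n) \<longrightarrow> (abv PP x \<noteq> {}) \<noteq> (lft PP x \<noteq> {}))"

lemma sg11: "sg n (1,1) = (1,n)" unfolding sg_def by simp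

lemma sg_eq11: "x \<in> T \<Longrightarrow> sg n x = (1,n) \<longleftrightarrow> x = (1,1)"
proof -
  assume x: "x \<in> T"
  then have "x \<in> box n" using Tb by auto
  moreover have "(1,1) \<in> box n" using x Tb by auto
  ultimately show ?thesis using sg_inj sg11 unfolding inj_on_def by metis
qed

lemma C2_iff: "C2T \<longleftrightarrow> C2P"
proof -
  have "C2T \<longleftrightarrow> (\<forall>x\<in>T. x \<noteq> (1,1) \<longrightarrow> AB x \<noteq> LF x)"
    unfolding C2T_def AB_def LF_def by (simp add: Ball_def split_paired_all)
  also have "\<dots> \<longleftrightarrow> (\<forall>x\<in>T. sg n x \<noteq> (1,n) \<longrightarrow> (abv PP (sg n x) \<noteq> {}) \<noteq> (lft PP (sg n x) \<noteq> {}))"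
    using AB_abv LF_lft sg_eq11 by auto
  also have "\<dots> \<longleftrightarrow> C2P" unfolding C2P_def by auto
  finally show ?thesis .
qed

lemma chl_sg: "C2T \<Longrightarrow> p \<in> T \<Longrightarrow> chl (1,n) PP (sg n p) = sg n ` cnm_children T p"
proof -
  assume c: "C2T" and p: "p \<in> T"
  have ABLF: "AB q \<or> LF q" if "q \<in> T" "q \<noteq> (1,1)" for q
    using c that unfolding C2T_def AB_def LF_def by (cases q) auto
  show ?thesis
  proof (rule set_eqI)
    fix y
    show "y \<in> chl (1,n) PP (sg n p) \<longleftrightarrow> y \<in> sg n ` cnm_children T p"
    proof
      assume "y \<in> chl (1,n) PP (sg n p)"
      then obtain q where q: "q \<in> T" "y = sg n q" "sg n q \<noteq> (1,n)" "par PP (sg n q) = sg n p"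
        unfolding chl_def by auto
      have q1: "q \<noteq> (1,1)" using q sg11 by auto
      have pp: "sg n (cnm_parent T q) = sg n p" "cnm_parent T q \<in> T"
        using parent_sg[OF q(1) ABLF[OF q(1) q1]] q(4) by auto
      have "cnm_parent T q = p" using pp p Tb sg_inj unfolding inj_on_def by blast
      then show "y \<in> sg n ` cnm_children T p" using q q1 unfolding cnm_children_def by auto
    next
      assume "y \<in> sg n ` cnm_children T p"
      then obtain q where q: "q \<in> T" "y = sg n q" "q \<noteq> (1,1)" "cnm_parent T q = p"
        unfolding cnm_children_def by auto
      have "sg n q \<noteq> (1,n)" using sg_eq11 q by auto
      moreover have "par PP (sg n q) = sg n p"
        using parent_sg[OF q(1) ABLF[OF q(1) q(3)]] q(4) by auto
      ultimately show "y \<in> chl (1,n) PP (sg n p)" using q unfolding chl_def by auto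
    qed
  qed
qed

lemma card_sg: "X \<subseteq> T \<Longrightarrow> card (sg n ` X) = card X"
  using card_image sg_inj Tb inj_on_subset by (metis subset_trans)

lemma children_sub: "cnm_children T p \<subseteq> T" unfolding cnm_children_def by auto

end


lemma cnm_good:
  assumes n: "n \<ge> 1"
  shows "(is_CNM n T \<and> upper_diagonal n T) \<longleftrightarrow> (T \<subseteq> box n \<and> good {1..n} (sg n ` T))"
proof -
  have mm: "Min {1..n} = 1" "Max {1..n} = n" using n by (auto intro!: Min_eqI Max_eqI)
  have aux: "(is_CNM n T \<and> upper_diagonal n T) \<longleftrightarrow> good {1..n} (sg n ` T)" if Tb: "T \<subseteq> box n"
  proof -
    let ?P = "sg n ` T"
    have Pb: "?P \<subseteq> box n"
    proof
      fix y assume "y \<in> ?P"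
      then obtain x where "x \<in> T" "y = sg n x" by blast
      then show "y \<in> box n" using sg_box[of x n] Tb by blast
    qed
    have r11: "(1,1) \<in> T \<longleftrightarrow> (1,n) \<in> ?P"
      using memP[OF Tb, of "(1,n)"] n by (simp add: sg_def)
    have c2: "C2T T \<longleftrightarrow> (\<forall>(i,j)\<in>T. (i,j) \<noteq> (1,1) \<longrightarrow> ((\<exists>i'<i. (i',j) \<in> T) \<noteq> (\<exists>j'<j. (i,j') \<in> T)))"
      unfolding C2T_def[OF Tb] by simp
    have c2p: "C2P n T \<longleftrightarrow> (\<forall>x\<in>?P. x \<noteq> (1, n) \<longrightarrow> (abv ?P x \<noteq> {}) \<noteq> (lft ?P x \<noteq> {}))"
      unfolding C2P_def[OF Tb] by simp
    have L1: "(\<forall>p\<in>T. card (cnm_children T p) = 0 \<or> card (cnm_children T p) = 2) \<longleftrightarrow>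
       (\<forall>y\<in>?P. card (chl (1,n) ?P y) = 0 \<or> card (chl (1,n) ?P y) = 2)" if C: "C2T T"
    proof -
      have "card (chl (1,n) ?P (sg n p)) = card (cnm_children T p)" if "p \<in> T" for p
        using chl_sg[OF Tb C that] card_sg[OF Tb children_sub[OF Tb]] by simp
      then show ?thesis by auto
    qed
    have L2: "upper_diagonal n T \<longleftrightarrow> {y\<in>?P. chl (1,n) ?P y = {}} = {(l,l) | l. l \<in> {1..n}}" if C: "C2T T"
    proof -
      have e1: "sg n ` cnm_leaves T = {y\<in>?P. chl (1,n) ?P y = {}}"
      proof (rule set_eqI)
        fix y
        show "y \<in> sg n ` cnm_leaves T \<longleftrightarrow> y \<in> {y\<in>?P. chl (1,n) ?P y = {}}"
          using chl_sg[OF Tb C] unfolding cnm_leaves_def by auto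
      qed
      have ad: "{(i, n + 1 - i) | i. 1 \<le> i \<and> i \<le> n} \<subseteq> box n" by auto
      have e2: "sg n ` {(i, n + 1 - i) | i. 1 \<le> i \<and> i \<le> n} = {(l,l) | l. l \<in> {1..n}}"
      proof (rule set_eqI)
        fix y
        show "y \<in> sg n ` {(i, n + 1 - i) | i. 1 \<le> i \<and> i \<le> n} \<longleftrightarrow> y \<in> {(l,l) | l. l \<in> {1..n}}"
        proof
          assume "y \<in> sg n ` {(i, n + 1 - i) | i. 1 \<le> i \<and> i \<le> n}"
          then obtain i where "y = sg n (i, n + 1 - i)" "1 \<le> i" "i \<le> n" by auto
          then show "y \<in> {(l,l) | l. l \<in> {1..n}}" by (auto simp: sg_def)
        next
          assume "y \<in> {(l,l) | l. l \<in> {1..n}}"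
          then obtain l where l: "y = (l,l)" "1 \<le> l" "l \<le> n" by auto
          then have "y = sg n (l, n + 1 - l)" by (auto simp: sg_def)
          then show "y \<in> sg n ` {(i, n + 1 - i) | i. 1 \<le> i \<and> i \<le> n}" using l by blast
        qed
      qed
      have lsub: "cnm_leaves T \<subseteq> box n" using Tb unfolding cnm_leaves_def by auto
      have "upper_diagonal n T \<longleftrightarrow> sg n ` cnm_leaves T = sg n ` {(i, n + 1 - i) | i. 1 \<le> i \<and> i \<le> n}"
        unfolding upper_diagonal_def using sg_img_inj[OF lsub ad] by auto
      then show ?thesis using e1 e2 by simp
    qed
    show ?thesis
    proof
      assume A: "is_CNM n T \<and> upper_diagonal n T"
      have C: "C2T T" using A c2 unfolding is_CNM_def by blast
      have "C2P n T" using C C2_iff[OF Tb] by simp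
      moreover have "(1,n) \<in> ?P" using A r11 unfolding is_CNM_def by blast
      moreover have "\<forall>p\<in>T. card (cnm_children T p) = 0 \<or> card (cnm_children T p) = 2"
        using A unfolding is_CNM_def by blast
      then have "\<forall>y\<in>?P. card (chl (1,n) ?P y) = 0 \<or> card (chl (1,n) ?P y) = 2"
        using L1[OF C] by simp
      moreover have "{y\<in>?P. chl (1,n) ?P y = {}} = {(l,l) | l. l \<in> {1..n}}" using A L2[OF C] by simp
      ultimately show "good {1..n} ?P" unfolding good_def mm using Pb n c2p by auto
    next
      assume G: "good {1..n} ?P"
      have "C2P n T" using G c2p unfolding good_def mm by blast
      then have C: "C2T T" using C2_iff[OF Tb] by simp
      have "{y\<in>?P. chl (1,n) ?P y = {}} = {(l,l) | l. l \<in> {1..n}}" using G unfolding good_def mm by blast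
      then have UD: "upper_diagonal n T" using L2[OF C] by simp
      then have ad: "{(i, n + 1 - i) | i. 1 \<le> i \<and> i \<le> n} \<subseteq> T"
        unfolding upper_diagonal_def cnm_leaves_def by blast
      have rows: "\<forall>i\<in>{1..n}. \<exists>j. (i,j) \<in> T"
      proof
        fix i assume "i \<in> {1..n}"
        then have "(i, n + 1 - i) \<in> {(i, n + 1 - i) | i. 1 \<le> i \<and> i \<le> n}" by auto
        then have "(i, n + 1 - i) \<in> T" using ad by blast
        then show "\<exists>j. (i,j) \<in> T" by blast
      qed
      have cols: "\<forall>j\<in>{1..n}. \<exists>i. (i,j) \<in> T"
      proof
        fix j assume j: "j \<in> {1..n}"
        then have "(n + 1 - j, n + 1 - (n + 1 - j)) \<in> {(i, n + 1 - i) | i. 1 \<le> i \<and> i \<le> n}"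
          by (intro CollectI exI[of _ "n + 1 - j"]) auto
        then have "(n + 1 - j, n + 1 - (n + 1 - j)) \<in> T" using ad by blast
        moreover have "n + 1 - (n + 1 - j) = j" using j by auto
        ultimately show "\<exists>i. (i,j) \<in> T" by auto
      qed
      have "(1,1) \<in> T" using G r11 unfolding good_def mm by blast
      moreover have "\<forall>y\<in>?P. card (chl (1,n) ?P y) = 0 \<or> card (chl (1,n) ?P y) = 2"
        using G unfolding good_def mm by (elim conjE) assumption
      then have "\<forall>p\<in>T. card (cnm_children T p) = 0 \<or> card (cnm_children T p) = 2"
        using L1[OF C] by simp
      moreover have "\<forall>(i,j)\<in>T. (i,j) \<noteq> (1,1) \<longrightarrow> ((\<exists>i'<i. (i',j) \<in> T) \<noteq> (\<exists>j'<j. (i,j') \<in> T))"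
        using C c2 by blast
      ultimately have "is_CNM n T" unfolding is_CNM_def using Tb rows cols by (intro conjI)
      then show "is_CNM n T \<and> upper_diagonal n T" using UD by blast
    qed
  qed
  show ?thesis
  proof
    assume A: "is_CNM n T \<and> upper_diagonal n T"
    then have "T \<subseteq> box n" unfolding is_CNM_def by blast
    then show "T \<subseteq> box n \<and> good {1..n} (sg n ` T)" using aux A by blast
  next
    assume "T \<subseteq> box n \<and> good {1..n} (sg n ` T)"
    then show "is_CNM n T \<and> upper_diagonal n T" using aux by blast
  qed
qed


lemma card_Hs: "finite L \<Longrightarrow> L \<noteq> {} \<Longrightarrow>
  finite (Hs L t) \<and> int (card (Hs L t)) = int (fact (card L - 1)) - (\<Sum>s<t. int (card (Fs L s)))"
proof (induction t)
  case 0 then show ?case using count[of L] by (simp add: Hs0)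
next
  case (Suc t)
  have fF: "finite (Fs L t)" using Suc Fs_sub finite_subset by blast
  have "card (Hs L (Suc t)) = card (Hs L t) - card (Fs L t)"
    unfolding Hs_Suc using fF Fs_sub by (simp add: card_Diff_subset)
  moreover have "card (Fs L t) \<le> card (Hs L t)" using Suc Fs_sub card_mono by blast
  ultimately have "int (card (Hs L (Suc t))) = int (card (Hs L t)) - int (card (Fs L t))" by simp
  then show ?case using Suc Hs_Suc by simp
qed

lemma card_Fs_ph: "finite L \<Longrightarrow> {1..k+2} \<subseteq> L \<Longrightarrow> int (card (Fs L k)) = ph (card L) k"
proof (induction k arbitrary: L rule: nat_less_induct)
  case (1 k)
  define L' where "L' = L - {Suc (Suc k)}"
  have inL: "Suc (Suc k) \<in> L" "Suc k \<in> L" using "1.prems" by auto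
  have fL': "finite L'" using "1.prems" unfolding L'_def by simp
  have ne: "L' \<noteq> {}" using inL unfolding L'_def by auto
  have cL': "card L' = card L - 1" using "1.prems" inL unfolding L'_def by simp
  have "int (card (Fs L k)) = int (card (Hs L' (k - 1)))" using card_Fs[OF inL] unfolding L'_def by simp
  also have "\<dots> = int (fact (card L' - 1)) - (\<Sum>s<k - 1. int (card (Fs L' s)))"
    using card_Hs[OF fL' ne] by simp
  also have "(\<Sum>s<k - 1. int (card (Fs L' s))) = (\<Sum>s<k - 1. ph (card L') s)"
  proof (rule sum.cong[OF refl])
    fix s assume s: "s \<in> {..<k - 1}"
    have "{1..s+2} \<subseteq> {1..k+2} - {Suc (Suc k)}" using s by auto
    then have "{1..s+2} \<subseteq> L'" using "1.prems" unfolding L'_def by blast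
    then show "int (card (Fs L' s)) = ph (card L') s" using "1.IH" s fL' by auto
  qed
  also have "int (fact (card L' - 1)) - (\<Sum>s<k - 1. ph (card L') s) = ph (card L) k"
    using ph_id[of "card L" k] cL' by (simp add: diff_diff_add numeral_2_eq_2)
  finally show ?case .
qed

lemma sg_img_sg: "A \<subseteq> box n \<Longrightarrow> sg n ` (sg n ` A) = A"
proof -
  assume A: "A \<subseteq> box n"
  have "sg n ` (sg n ` A) = (\<lambda>x. sg n (sg n x)) ` A" by (simp add: image_image)
  also have "\<dots> = A" using sg_sg A by (auto intro!: image_eqI)
  finally show ?thesis .
qed

lemma sg_img_box: "A \<subseteq> box n \<Longrightarrow> sg n ` A \<subseteq> box n"
proof
  fix y assume "A \<subseteq> box n" "y \<in> sg n ` A"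
  then obtain x where "x \<in> A" "y = sg n x" "x \<in> box n" by blast
  then show "y \<in> box n" using sg_box[of x n] by blast
qed

lemma memT: "A \<subseteq> box n \<Longrightarrow> 1 \<le> i \<Longrightarrow> i < n \<Longrightarrow> ((i, n - i) \<in> A \<longleftrightarrow> (i, Suc i) \<in> sg n ` A)"
proof -
  assume A: "A \<subseteq> box n" and i: "1 \<le> i" "i < n"
  have b: "(i, n - i) \<in> box n" using i by auto
  have s: "sg n (i, n - i) = (i, Suc i)" using i unfolding sg_def by auto
  show ?thesis
  proof
    assume "(i, n - i) \<in> A" then show "(i, Suc i) \<in> sg n ` A" using s by force
  next
    assume "(i, Suc i) \<in> sg n ` A"
    then obtain z where "z \<in> A" "sg n z = sg n (i, n - i)" using s by auto
    moreover have "z \<in> box n" using A \<open>z \<in> A\<close> by auto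
    ultimately show "(i, n - i) \<in> A" using sg_inj b unfolding inj_on_def by metis
  qed
qed

theorem theorem4p10:
  fixes n k :: nat
  assumes "n \<ge> 2" and "k \<le> n - 2"
  shows "int (f_cnm n k) =
    (\<Sum>j=0..k. int ((k - j) choose j) * (-1) ^ j * int (fact (n - 2 - j)))"
proof -
  have n1: "n \<ge> 1" using assms by simp
  let ?S = "{T. is_CNM n T \<and> upper_diagonal n T \<and>
      (\<forall>i\<in>{1..k}. (i, n - i) \<notin> T) \<and> (k + 1, n - k - 1) \<in> T}"
  let ?F = "Fs {1..n} k"
  let ?g = "\<lambda>t. sg n ` pos t"
  have posb: "pos t \<subseteq> box n" if "t \<in> ?F" for t
    using that pos_sub[of t] unfolding Fs_def Hs_def by auto
  have cond: "((i, n - i) \<in> sg n ` pos t \<longleftrightarrow> has_ch i t)" if "t \<in> ?F" "1 \<le> i" "i < n" for t i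
  proof -
    have "sg n ` pos t \<subseteq> box n" using sg_img_box[OF posb[OF that(1)]] .
    then have "(i, n - i) \<in> sg n ` pos t \<longleftrightarrow> (i, Suc i) \<in> sg n ` (sg n ` pos t)"
      using memT that by blast
    also have "\<dots> \<longleftrightarrow> (i, Suc i) \<in> pos t" using sg_img_sg[OF posb[OF that(1)]] by simp
    also have "\<dots> \<longleftrightarrow> has_ch i t"
    proof -
      have "valid t" using that(1) unfolding Fs_def Hs_def by blast
      then show ?thesis by (rule ch_pos)
    qed
    finally show ?thesis .
  qed
  have eq: "?S = ?g ` ?F"
  proof
    show "?S \<subseteq> ?g ` ?F"
    proof
      fix T assume T: "T \<in> ?S"
      then have "is_CNM n T \<and> upper_diagonal n T" by blast
      then have Tb: "T \<subseteq> box n" and G: "good {1..n} (sg n ` T)" using cnm_good[OF n1] by blast+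
      obtain t where t: "valid t" "leaves t = {1..n}" "pos t = sg n ` T"
        using good_iff[of "{1..n}" "sg n ` T"] G by blast
      have TT: "T = ?g t" using t(3) sg_img_sg[OF Tb] by simp
      have hc: "(i, n - i) \<in> T \<longleftrightarrow> has_ch i t" if "1 \<le> i" "i < n" for i
      proof -
        have "(i, n - i) \<in> T \<longleftrightarrow> (i, Suc i) \<in> sg n ` T" using memT[OF Tb that] .
        also have "\<dots> \<longleftrightarrow> (i, Suc i) \<in> pos t" using t(3) by simp
        also have "\<dots> \<longleftrightarrow> has_ch i t" using ch_pos[OF t(1)] .
        finally show ?thesis .
      qed
      have "\<forall>i\<in>{1..k}. \<not> has_ch i t"
      proof
        fix i assume i: "i \<in> {1..k}"
        then have "(i, n - i) \<notin> T" using T by blast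
        moreover have "1 \<le> i" "i < n" using i assms by auto
        ultimately show "\<not> has_ch i t" using hc by blast
      qed
      moreover have "has_ch (Suc k) t"
      proof -
        have "(k + 1, n - k - 1) \<in> T" using T by blast
        then have "(Suc k, n - Suc k) \<in> T" by simp
        moreover have "1 \<le> Suc k" "Suc k < n" using assms by auto
        ultimately show ?thesis using hc by blast
      qed
      ultimately have "t \<in> ?F" using t unfolding Fs_def Hs_def by auto
      then show "T \<in> ?g ` ?F" using TT by blast
    qed
  next
    show "?g ` ?F \<subseteq> ?S"
    proof
      fix T assume "T \<in> ?g ` ?F"
      then obtain t where t: "t \<in> ?F" "T = ?g t" by blast
      have tv: "valid t" "leaves t = {1..n}" "has_ch (Suc k) t" "\<forall>i\<in>{1..k}. \<not> has_ch i t"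
        using t(1) unfolding Fs_def Hs_def by auto
      have Tb: "T \<subseteq> box n" using sg_img_box[OF posb[OF t(1)]] t(2) by simp
      have "sg n ` T = pos t" using t(2) sg_img_sg[OF posb[OF t(1)]] by simp
      then have "good {1..n} (sg n ` T)" using valid_good[OF tv(1)] tv(2) by simp
      then have C: "is_CNM n T \<and> upper_diagonal n T" using cnm_good[OF n1] Tb by auto
      have "\<forall>i\<in>{1..k}. (i, n - i) \<notin> T"
      proof
        fix i assume i: "i \<in> {1..k}"
        then have "1 \<le> i" "i < n" using assms by auto
        then have "(i, n - i) \<in> T \<longleftrightarrow> has_ch i t" using cond[OF t(1)] t(2) by blast
        then show "(i, n - i) \<notin> T" using tv(4) i by blast
      qed
      moreover have "(k + 1, n - k - 1) \<in> T"
        using cond[OF t(1), of "Suc k"] tv(3) t(2) assms by (simp add: diff_diff_add)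
      ultimately show "T \<in> ?S" using C by auto
    qed
  qed
  have inj: "inj_on ?g ?F"
  proof (rule inj_onI)
    fix t1 t2 assume t: "t1 \<in> ?F" "t2 \<in> ?F" "?g t1 = ?g t2"
    have "pos t1 = pos t2" using sg_img_inj[OF posb[OF t(1)] posb[OF t(2)] t(3)] .
    then show "t1 = t2" using pos_inj t unfolding Fs_def Hs_def by auto
  qed
  have "f_cnm n k = card ?F" unfolding f_cnm_def eq using card_image[OF inj] by simp
  moreover have "int (card ?F) = ph n k"
    using card_Fs_ph[of "{1..n}" k] assms by auto
  ultimately show ?thesis unfolding ph_def by simp
qed


end
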